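(* Let $N\geq2$, $m\in\mathbb{N}$, and let $K:(0,+\infty)\to[0,+\infty)$ be continuous with $$\int_0^{+\infty}K(t)\,t^{N-1+i}\,dt\in(0,+\infty]\quad\text{for } i=2,3,\dots,m.$$ For $\epsilon\in(0,1)$ and $i,j\in\{2,\dots,m\}$ let $\kappa_{i,j}(\epsilon)=\dfrac{\int_\epsilon^{1/\epsilon}K(t)t^{N-1+j}dt}{\int_\epsilon^{1/\epsilon}K(t)t^{N-1+i}dt}$. If either $\lim_{\epsilon\to0^+}\kappa_{i,j}(\epsilon)=0$ for all $i,j\in\{2,\dots,m\}$ with $i>j$, or $\lim_{\epsilon\to0^+}\kappa_{i,j}(\epsilon)=0$ for all $i,j\in\{2,\dots,m\}$ with $i<j$, then $\mathcal{H}_m^{K}(\mathbb{R}^N)=\mathcal{H}_m^1(\mathbb{R}^N)$. In particular, for $m=0,1$, $\mathcal{H}_m^{K}(\mathbb{R}^N)=\mathcal{H}_m^1(\mathbb{R}^N)=\mathbb{P}_m(\mathbb{R}^N)$.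
   Context: $\mathbb{N}=\{0,1,2,\dots\}$. For a continuous kernel $K:(0,\infty)\to[0,\infty)$ and $u:\mathbb{R}^N\to\mathbb{R}$, define $\mathcal{L}_K u(x)=\lim_{\epsilon\to0^+}\int_{B_{1/\epsilon}\setminus B_\epsilon}\big(u(x)-u(x+z)\big)K(|z|)\,dz$ ($B_r$ the ball of radius $r$ centered at $0$). $\mathbb{P}_m(\mathbb{R}^N)=\{\sum_{|\alpha|=m}b_\alpha x^\alpha:\alpha\in\mathbb{N}^N,\ b_\alpha\in\mathbb{R}\}$ (homogeneous polynomials of degree $m$). $\mathcal{H}_m^K(\mathbb{R}^N)=\{u\in\mathbb{P}_m(\mathbb{R}^N):\ \mathcal{L}_K u(x)=0\text{ for all }x\in\mathbb{R}^N\}$, and $\mathcal{H}_m^1(\mathbb{R}^N)$ is the set of $u\in\mathbb{P}_m(\mathbb{R}^N)$ with $\Delta u=0$ in $\mathbb{R}^N$. *)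

theory Defs
  imports "HOL-Analysis.Analysis"
begin

definition hom_poly :: "nat \<Rightarrow> (real^'n \<Rightarrow> real) set" where
  "hom_poly m = {u. \<exists>b :: ('n \<Rightarrow> nat) \<Rightarrow> real.
      u = (\<lambda>x. \<Sum>\<alpha>\<in>{\<alpha>::'n \<Rightarrow> nat. sum \<alpha> UNIV = m}.
                 b \<alpha> * (\<Prod>i\<in>UNIV. (x $ i) ^ (\<alpha> i)))}"

definition LK_trunc :: "(real \<Rightarrow> real) \<Rightarrow> (real^'n \<Rightarrow> real) \<Rightarrow> real^'n \<Rightarrow> real \<Rightarrow> real" where
  "LK_trunc K u x \<epsilon> =
     integral (ball 0 (1/\<epsilon>) - ball 0 \<epsilon>) (\<lambda>z. (u x - u (x + z)) * K (norm z))"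

definition LK_zero_at :: "(real \<Rightarrow> real) \<Rightarrow> (real^'n \<Rightarrow> real) \<Rightarrow> real^'n \<Rightarrow> bool" where
  "LK_zero_at K u x \<longleftrightarrow> (LK_trunc K u x \<longlongrightarrow> 0) (at_right 0)"

definition HK :: "(real \<Rightarrow> real) \<Rightarrow> nat \<Rightarrow> (real^'n \<Rightarrow> real) set" where
  "HK K m = {u \<in> hom_poly m. \<forall>x. LK_zero_at K u x}"

definition laplacian :: "(real^'n \<Rightarrow> real) \<Rightarrow> real^'n \<Rightarrow> real" where
  "laplacian u x = (\<Sum>i\<in>UNIV. (deriv ^^ 2) (\<lambda>t. u (x + t *\<^sub>R axis i 1)) 0)"

definition H1 :: "nat \<Rightarrow> (real^'n \<Rightarrow> real) set" where
  "H1 m = {u \<in> hom_poly m. \<forall>x. laplacian u x = 0}"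

definition kappa :: "(real \<Rightarrow> real) \<Rightarrow> nat \<Rightarrow> nat \<Rightarrow> nat \<Rightarrow> real \<Rightarrow> real" where
  "kappa K N i j \<epsilon> =
     integral {\<epsilon>..1/\<epsilon>} (\<lambda>t. K t * t ^ (N - 1 + j)) /
     integral {\<epsilon>..1/\<epsilon>} (\<lambda>t. K t * t ^ (N - 1 + i))"

end

theory Submission
  imports Defs
begin

definition shear :: "'n::finite \<Rightarrow> 'n \<Rightarrow> real \<Rightarrow> real^'n \<Rightarrow> real^'n" where
  "shear m n c x = (\<chi> k. if k = m then x$m + c * x$n else x$k)"

lemma shear1_cbox:
  fixes a b :: "real^'n::finite"
  assumes "m \<noteq> n"
  shows "measure lebesgue (shear m n 1 ` cbox a b) = measure lebesgue (cbox a b)"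
proof (cases "cbox a b = {}")
  case True then show ?thesis by simp
next
  case False
  let ?h = "\<lambda>v::(real, 'n) vec. \<chi> i. if i = m then v $ m + v $ n else v $ i"
  have hh: "shear m n 1 = ?h" by (auto simp: shear_def fun_eq_iff)
  then have ne: "(+) (\<chi> i. if i = n then - a $ n else 0) ` cbox a b \<noteq> {}"
    using False by auto
  let ?v = "\<chi> i. if i = n then - a $ n else 0"
  have "?h ` cbox a b
        = (+) (\<chi> i. if i = m \<or> i = n then a $ n else 0) ` ?h ` (+) ?v ` (cbox a b)"
    using \<open>m \<noteq> n\<close> unfolding image_comp o_def by (force simp: vec_eq_iff)
  then have "measure lebesgue (?h ` (cbox a b))
           = measure lebesgue ((\<lambda>v. \<chi> i. if i = m then v $ m + v $ n else v $ i) `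
                               (+) ?v ` cbox a b)"
    by (rule ssubst) (rule measure_translation)
  also have "\<dots> = measure lebesgue ((\<lambda>v. \<chi> i. if i = m then v $ m + v $ n else v $ i) ` cbox (?v +a) (?v + b))"
    by (metis (no_types, lifting) cbox_translation)
  also have "\<dots> = measure lebesgue ((+) ?v ` cbox a b)"
    apply (subst measure_shear_interval)
    using \<open>m \<noteq> n\<close> ne apply auto
    apply (simp add: cbox_translation)
    by (metis cbox_borel cbox_translation measure_completion sets_lborel)
  also have "\<dots> = measure lebesgue (cbox a b)"
    by (rule measure_translation)
  finally show ?thesis by (simp add: hh)
qed

lemma linear_shear: "linear (shear m n c)"
  by (rule linearI) (auto simp: shear_def algebra_simps plus_vec_def scaleR_vec_def vec_eq_iff)

lemma shear1_meas:
  fixes S :: "(real^'n::finite) set"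
  assumes "m \<noteq> n" "S \<in> lmeasurable"
  shows "shear m n 1 ` S \<in> lmeasurable \<and> measure lebesgue (shear m n 1 ` S) = measure lebesgue S"
  proof -
  have "\<And>a b. measure lebesgue (shear m n 1 ` cbox a b) = 1 * measure lebesgue (cbox a b)"
    using shear1_cbox[OF assms(1)] by simp
  from measure_linear_sufficient[OF linear_shear assms(2) this] show ?thesis by simp
qed

lemma shear_meas:
  fixes S :: "(real^'n::finite) set"
  assumes "m \<noteq> n" "S \<in> lmeasurable"
  shows "shear m n c ` S \<in> lmeasurable \<and> measure lebesgue (shear m n c ` S) = measure lebesgue S"
proof (cases "c = 0")
  case True
  then have "shear m n c = id" by (auto simp: shear_def fun_eq_iff vec_eq_iff)
  then show ?thesis using assms by simp
next
  case False
  define d where "d = (\<lambda>k. if k = n then c else 1)"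
  define d' where "d' = (\<lambda>k. if k = n then 1/c else 1)"
  let ?D = "\<lambda>(x::real^'n). \<chi> k. d k * x$k"
  let ?D' = "\<lambda>(x::real^'n). \<chi> k. d' k * x$k"
  have eq: "shear m n c ` S = ?D' ` (shear m n 1 ` (?D ` S))"
  proof -
    have "shear m n c x = ?D' (shear m n 1 (?D x))" for x
      using assms(1) False by (auto simp: shear_def d_def d'_def vec_eq_iff)
    then show ?thesis by (auto simp: image_comp o_def)
  qed
  have pd: "prod d UNIV = c"
    by (simp add: d_def prod.If_cases)
  have pd': "prod d' UNIV = 1/c"
    by (simp add: d'_def prod.If_cases)
  have 1: "?D ` S \<in> lmeasurable" "measure lebesgue (?D ` S) = \<bar>c\<bar> * measure lebesgue S"
    using measurable_stretch[OF assms(2), of d] measure_stretch[OF assms(2), of d] pd by auto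
  have 2: "shear m n 1 ` (?D ` S) \<in> lmeasurable" "measure lebesgue (shear m n 1 ` (?D ` S)) = \<bar>c\<bar> * measure lebesgue S"
    using shear1_meas[OF assms(1) 1(1)] 1(2) by auto
  have 3: "?D' ` (shear m n 1 ` (?D ` S)) \<in> lmeasurable"
     "measure lebesgue (?D' ` (shear m n 1 ` (?D ` S))) = measure lebesgue S"
    using measurable_stretch[OF 2(1), of d'] measure_stretch[OF 2(1), of d'] pd' 2(2) False
    by (auto simp: abs_divide)
  show ?thesis using 3 eq by simp
qed

lemma lborel_invariant:
  fixes T T' :: "real^'n::finite \<Rightarrow> real^'n"
  assumes contT: "continuous_on UNIV T"
    and inv1: "\<And>x. T (T' x) = x" and inv2: "\<And>x. T' (T x) = x"
    and pres: "\<And>S. S \<in> lmeasurable \<Longrightarrow> T' ` S \<in> lmeasurable \<and> measure lebesgue (T' ` S) = measure lebesgue S"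
  shows "distr lborel borel T = lborel"
proof (rule lborel_eqI[symmetric])
  have Tm: "T \<in> borel_measurable borel"
    using contT by (rule borel_measurable_continuous_onI)
  fix l u :: "real^'n"
  assume le: "\<And>b. b \<in> Basis \<Longrightarrow> l \<bullet> b \<le> u \<bullet> b"
  have pre: "T -` box l u = T' ` box l u"
    using inv1 inv2 by (auto simp: image_iff) (metis)
  have ob: "open (T -` box l u)"
    using contT by (simp add: continuous_on_open_vimage open_box)
  have "emeasure (distr lborel borel T) (box l u) = emeasure lborel (T -` box l u)"
    by (subst emeasure_distr) (auto simp: Tm)
  also have "\<dots> = emeasure lebesgue (T -` box l u)"
    using ob by (simp add: emeasure_completion borel_open)
  also have "\<dots> = emeasure lebesgue (T' ` box l u)"
    using pre by simp
  also have "\<dots> = ennreal (measure lebesgue (T' ` box l u))"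
    by (rule emeasure_eq_measure2) (use pres[of "box l u"] in auto)
  also have "\<dots> = ennreal (measure lebesgue (box l u))"
    using pres[of "box l u"] by simp
  also have "\<dots> = emeasure lebesgue (box l u)"
    by (rule emeasure_eq_measure2[symmetric]) auto
  also have "\<dots> = emeasure lborel (box l u)"
    by (simp add: emeasure_completion)
  also have "\<dots> = (\<Prod>b\<in>Basis. (u - l) \<bullet> b)"
    using le by simp
  finally show "emeasure (distr lborel borel T) (box l u) = (\<Prod>b\<in>Basis. (u - l) \<bullet> b)" .
qed simp

definition rot :: "'n::finite \<Rightarrow> 'n \<Rightarrow> real \<Rightarrow> real \<Rightarrow> real^'n \<Rightarrow> real^'n" where
  "rot i j c s z = (\<chi> k. if k = i then c * z$i - s * z$j else if k = j then s * z$i + c * z$j else z$k)"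

definition rflx :: "'n::finite \<Rightarrow> real^'n \<Rightarrow> real^'n" where
  "rflx i z = (\<chi> k. if k = i then - z$k else z$k)"

lemma shear_nth: "shear m n c x $ k = (if k = m then x$m + c * x$n else x$k)"
  by (simp add: shear_def)

lemma rot_nth: "rot i j c s z $ k = (if k = i then c * z$i - s * z$j else if k = j then s * z$i + c * z$j else z$k)"
  by (simp add: rot_def)

lemma rot_inv:
  fixes i j :: "'n::finite"
  assumes "i \<noteq> j" "c^2 + s^2 = 1"
  shows "rot i j c (-s) (rot i j c s z) = z"
proof -
  have 1: "c * (c * z$i - s * z$j) - (-s) * (s * z$i + c * z$j) = (c^2+s^2) * z$i"
    by (simp add: algebra_simps power2_eq_square)
  have 2: "(-s) * (c * z$i - s * z$j) + c * (s * z$i + c * z$j) = (c^2+s^2) * z$j"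
    by (simp add: algebra_simps power2_eq_square)
  show ?thesis using assms 1 2 by (simp add: rot_def vec_eq_iff)
qed

lemma rot_shears:
  fixes i j :: "'n::finite"
  assumes "i \<noteq> j" "c^2 + s^2 = 1" "c \<noteq> -1"
  shows "rot i j c s = (\<lambda>x. shear i j (- s/(1+c)) (shear j i s (shear i j (- s/(1+c)) x)))"
proof -
  have c1: "1 + c \<noteq> 0" using assms(3) by auto
  define a where "a = - s/(1+c)"
  have s2: "s^2 = (1 - c) * (1 + c)" using assms(2) by (simp add: algebra_simps power2_eq_square)
  have e1: "1 + a * s = c"
  proof -
    have "a * s = - (s^2) / (1+c)" by (simp add: a_def power2_eq_square)
    also have "\<dots> = - (1 - c)" using c1 by (simp add: s2)
    finally show ?thesis by simp
  qed
  have a2: "a^2 = (1 - c) / (1 + c)"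
  proof -
    have "a^2 = s^2 / (1+c)^2" by (simp add: a_def power_divide)
    also have "\<dots> = (1 - c) * (1 + c) / ((1 + c) * (1 + c))" by (simp only: s2) (simp add: power2_eq_square)
    also have "\<dots> = (1 - c) / (1 + c)" using c1 by simp
    finally show ?thesis .
  qed
  have e2: "2 * a + a^2 * s = - s"
  proof -
    have t1: "2 * a = (- 2 * s) / (1 + c)" by (simp add: a_def)
    have t2: "a^2 * s = ((1 - c) * s) / (1 + c)" by (simp add: a2)
    have "2 * a + a^2 * s = (- 2 * s + (1 - c) * s) / (1 + c)"
      unfolding t1 t2 by (simp add: add_divide_distrib diff_divide_distrib)
    also have "\<dots> = - s * (1 + c) / (1 + c)" by (simp add: algebra_simps)
    also have "\<dots> = - s" using c1 by simp
    finally show ?thesis .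
  qed
  show ?thesis
  proof
    fix x :: "real^'n"
    have "x$i + a * x$j + a * (x$j + s * (x$i + a * x$j)) = (1 + a * s) * x$i + (2 * a + a^2 * s) * x$j"
      by (simp add: algebra_simps power2_eq_square)
    also have "\<dots> = c * x$i - s * x$j" using e1 e2 by simp
    finally have A: "x$i + a * x$j + a * (x$j + s * (x$i + a * x$j)) = c * x$i - s * x$j" .
    have "x$j + s * (x$i + a * x$j) = s * x$i + (1 + a * s) * x$j"
      by (simp add: algebra_simps)
    then have B: "x$j + s * (x$i + a * x$j) = s * x$i + c * x$j" using e1 by simp
    show "rot i j c s x = shear i j (- s/(1+c)) (shear j i s (shear i j (- s/(1+c)) x))"
    unfolding vec_eq_iff proof
      fix k
      show "rot i j c s x $ k = shear i j (- s/(1+c)) (shear j i s (shear i j (- s/(1+c)) x)) $ k"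
        unfolding a_def[symmetric] rot_nth shear_nth
        using assms(1) A B by (cases "k = i"; cases "k = j") simp_all
    qed
  qed
qed

lemma rot_norm:
  fixes i j :: "'n::finite"
  assumes "i \<noteq> j" "c^2 + s^2 = 1"
  shows "norm (rot i j c s z) = norm z"
proof -
  have "(\<Sum>k\<in>UNIV. (rot i j c s z)$k * (rot i j c s z)$k) = (\<Sum>k\<in>UNIV. z$k * z$k)"
  proof -
    have r: "(\<Sum>k\<in>UNIV. f k) = f i + f j + (\<Sum>k\<in>UNIV-{i,j}. f k)" for f :: "'n \<Rightarrow> real"
    proof -
      have "(\<Sum>k\<in>UNIV. f k) = f i + (\<Sum>k\<in>UNIV-{i}. f k)" by (rule sum.remove) auto
      also have "(\<Sum>k\<in>UNIV-{i}. f k) = f j + (\<Sum>k\<in>UNIV-{i}-{j}. f k)"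
        by (rule sum.remove) (use assms(1) in auto)
      also have "UNIV-{i}-{j} = UNIV-{i,j}" by auto
      finally show ?thesis by simp
    qed
    have "(c * z$i - s * z$j) * (c * z$i - s * z$j) + (s * z$i + c * z$j) * (s * z$i + c * z$j)
        = (c^2 + s^2) * (z$i * z$i) + (c^2 + s^2) * (z$j * z$j)"
      by (simp add: algebra_simps power2_eq_square)
    then show ?thesis
      using assms by (subst (1 2) r) (simp add: rot_def)
  qed
  then show ?thesis by (simp add: norm_eq_sqrt_inner inner_vec_def)
qed

lemma refl_norm: "norm (rflx i z) = norm z"
proof -
  have "(\<Sum>k\<in>UNIV. (rflx i z)$k * (rflx i z)$k) = (\<Sum>k\<in>UNIV. z$k * z$k)"
    by (rule sum.cong) (auto simp: rflx_def)
  then show ?thesis by (simp add: norm_eq_sqrt_inner inner_vec_def)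
qed

lemma linear_rot: "linear (rot i j c s)"
proof (rule linearI)
  show "rot i j c s (x + y) = rot i j c s x + rot i j c s y" for x y
    unfolding vec_eq_iff by (simp add: rot_nth distrib_left right_diff_distrib)
  show "rot i j c s (r *\<^sub>R x) = r *\<^sub>R rot i j c s x" for r x
    unfolding vec_eq_iff by (simp add: rot_nth right_diff_distrib distrib_left)
qed

lemma linear_refl: "linear (rflx i)"
proof (rule linearI)
  show "rflx i (x + y) = rflx i x + rflx i y" for x y
    unfolding vec_eq_iff by (simp add: rflx_def)
  show "rflx i (r *\<^sub>R x) = r *\<^sub>R rflx i x" for r x
    unfolding vec_eq_iff by (simp add: rflx_def)
qed

lemma continuous_rot: "continuous_on UNIV (rot i j c s)"
  by (rule linear_continuous_on) (simp add: linear_conv_bounded_linear[symmetric] linear_rot)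

lemma continuous_refl: "continuous_on UNIV (rflx i)"
  by (rule linear_continuous_on) (simp add: linear_conv_bounded_linear[symmetric] linear_refl)

lemma rot_lborel:
  fixes i j :: "'n::finite"
  assumes "i \<noteq> j" "c^2 + s^2 = 1" "c \<noteq> -1"
  shows "distr lborel borel (rot i j c s) = lborel"
proof (rule lborel_invariant[where T'="rot i j c (-s)"])
  show "continuous_on UNIV (rot i j c s)" by (rule continuous_rot)
  show "rot i j c s (rot i j c (- s) x) = x" for x
    using rot_inv[OF assms(1), of c "-s" x] assms(2) by simp
  show "rot i j c (- s) (rot i j c s x) = x" for x
    using rot_inv[OF assms(1,2)] by simp
  fix S :: "(real^'n) set" assume S: "S \<in> lmeasurable"
  have eq: "rot i j c (-s) ` S = shear i j (- (-s)/(1+c)) ` shear j i (-s) ` shear i j (- (-s)/(1+c)) ` S"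
    using rot_shears[OF assms(1) _ assms(3), of "-s"] assms(2) by (simp add: image_comp o_def)
  show "rot i j c (- s) ` S \<in> lmeasurable \<and> measure lebesgue (rot i j c (- s) ` S) = measure lebesgue S"
    unfolding eq using shear_meas assms(1) S by (metis)
qed

lemma refl_lborel: fixes i :: "'n::finite" shows "distr lborel borel (rflx i) = lborel"
proof (rule lborel_invariant[where T'="rflx i"])
  show "continuous_on UNIV (rflx i)" by (rule continuous_refl)
  show "rflx i (rflx i x) = x" for x by (simp add: rflx_def vec_eq_iff)
  show "rflx i (rflx i x) = x" for x by (simp add: rflx_def vec_eq_iff)
  fix S :: "(real^'n) set" assume S: "S \<in> lmeasurable"
  define d where "d = (\<lambda>k. if k = i then -1 else (1::real))"
  have eq: "rflx i = (\<lambda>x. \<chi> k. d k * x$k)" by (auto simp: rflx_def d_def fun_eq_iff vec_eq_iff)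
  have pd: "\<bar>prod d UNIV\<bar> = 1" by (simp add: d_def prod.If_cases)
  show "rflx i ` S \<in> lmeasurable \<and> measure lebesgue (rflx i ` S) = measure lebesgue S"
    unfolding eq using measurable_stretch[OF S, of d] measure_stretch[OF S, of d] pd by simp
qed

definition ann :: "real \<Rightarrow> (real^'n::finite) set" where
  "ann e = ball 0 (1/e) - ball 0 e"

lemma mem_ann: "z \<in> ann e \<longleftrightarrow> e \<le> norm z \<and> norm z < 1/e"
  by (auto simp: ann_def dist_norm)

lemma ann_sets: "ann e \<in> sets lborel"
  unfolding ann_def by (intro sets.Diff borel_open) auto

lemma lb_form:
  fixes q :: "real^'n::finite \<Rightarrow> real" and K :: "real \<Rightarrow> real"
  assumes Kc: "continuous_on {0<..} K" and e: "e > 0" and q: "continuous_on UNIV q"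
  shows "integrable lborel (\<lambda>z. indicator (ann e) z * (q z * K (max (norm z) e)))"
    and "(\<lambda>z. q z * K (norm z)) integrable_on ann e"
    and "integral (ann e) (\<lambda>z. q z * K (norm z))
          = integral\<^sup>L lborel (\<lambda>z. indicator (ann e) z * (q z * K (max (norm z) e)))"
proof -
  define g where "g = (\<lambda>z. q z * K (max (norm z) e))"
  have gc: "continuous_on UNIV g"
  proof -
    have "continuous_on UNIV (\<lambda>z::real^'n. K (max (norm z) e))"
      by (rule continuous_on_compose2[OF Kc]) (use e in \<open>auto intro!: continuous_intros\<close>)
    then show ?thesis unfolding g_def by (intro continuous_intros q)
  qed
  have i1: "integrable lborel (\<lambda>z. indicator (cball (0::real^'n) (1/e)) z *\<^sub>R g z)"
    by (rule borel_integrable_compact) (auto intro: continuous_on_subset[OF gc])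
  have sub: "ann e \<subseteq> cball (0::real^'n) (1/e)" by (auto simp: ann_def)
  have eqF: "(\<lambda>z. indicator (ann e) z *\<^sub>R (indicator (cball (0::real^'n) (1/e)) z *\<^sub>R g z))
     = (\<lambda>z. indicator (ann e) z * (q z * K (max (norm z) e)))"
    using sub by (auto simp: g_def fun_eq_iff indicator_def)
  show I: "integrable lborel (\<lambda>z. indicator (ann e) z * (q z * K (max (norm z) e)))"
    using integrable_mult_indicator[OF ann_sets[of e] i1] unfolding eqF .
  have "((\<lambda>z. indicator (ann e) z * (q z * K (max (norm z) e))) has_integral
        integral\<^sup>L lborel (\<lambda>z. indicator (ann e) z * (q z * K (max (norm z) e)))) UNIV"
    by (rule has_integral_integral_lborel[OF I])
  moreover have "(\<lambda>z. indicator (ann e) z * (q z * K (max (norm z) e))) = (\<lambda>z. if z \<in> ann e then g z else 0)"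
    by (auto simp: fun_eq_iff g_def)
  ultimately have "(g has_integral integral\<^sup>L lborel (\<lambda>z. indicator (ann e) z * (q z * K (max (norm z) e)))) (ann e)"
    by (simp add: has_integral_restrict_UNIV)
  moreover have gz: "\<And>z. z \<in> ann e \<Longrightarrow> q z * K (norm z) = g z"
    by (auto simp: g_def mem_ann max_def)
  ultimately have H: "((\<lambda>z. q z * K (norm z)) has_integral integral\<^sup>L lborel (\<lambda>z. indicator (ann e) z * (q z * K (max (norm z) e)))) (ann e)"
    by (subst has_integral_cong[OF gz]) auto
  then show "(\<lambda>z. q z * K (norm z)) integrable_on ann e" by blast
  from H show "integral (ann e) (\<lambda>z. q z * K (norm z))
          = integral\<^sup>L lborel (\<lambda>z. indicator (ann e) z * (q z * K (max (norm z) e)))"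
    by (rule integral_unique)
qed

lemma inv_integral:
  fixes q :: "real^'n::finite \<Rightarrow> real" and K :: "real \<Rightarrow> real" and T :: "real^'n \<Rightarrow> real^'n"
  assumes Kc: "continuous_on {0<..} K" and e: "e > 0" and q: "continuous_on UNIV q"
    and T: "distr lborel borel T = lborel" "continuous_on UNIV T" "\<And>z. norm (T z) = norm z"
  shows "integral (ann e) (\<lambda>z. q (T z) * K (norm z)) = integral (ann e) (\<lambda>z. q z * K (norm z))"
proof -
  define F where "F = (\<lambda>z. indicator (ann e) z * (q z * K (max (norm z) e)))"
  have qT: "continuous_on UNIV (\<lambda>z. q (T z))"
    by (rule continuous_on_compose2[OF q T(2)]) auto
  have Tm: "T \<in> measurable lborel borel"
    using borel_measurable_continuous_onI[OF T(2)] by simp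
  have Fm: "F \<in> borel_measurable borel"
    using borel_measurable_integrable[OF lb_form(1)[OF Kc e q]] unfolding F_def by simp
  have indT: "indicator (ann e) (T z) = (indicator (ann e) z :: real)" for z
    by (simp add: indicator_def mem_ann T(3))
  have "integral (ann e) (\<lambda>z. q (T z) * K (norm z))
      = integral\<^sup>L lborel (\<lambda>z. indicator (ann e) z * (q (T z) * K (max (norm z) e)))"
    by (rule lb_form(3)[OF Kc e qT])
  also have "\<dots> = integral\<^sup>L lborel (\<lambda>z. F (T z))"
    by (simp add: F_def indT T(3))
  also have "\<dots> = integral\<^sup>L (distr lborel borel T) F"
    by (rule integral_distr[symmetric, OF Tm Fm])
  also have "\<dots> = integral\<^sup>L lborel F" by (simp add: T(1))
  also have "\<dots> = integral (ann e) (\<lambda>z. q z * K (norm z))"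
    unfolding F_def by (rule lb_form(3)[OF Kc e q, symmetric])
  finally show ?thesis .
qed

definition mnm :: "('n::finite \<Rightarrow> nat) \<Rightarrow> real^'n \<Rightarrow> real" where
  "mnm a z = (\<Prod>i\<in>UNIV. (z$i) ^ (a i))"

definition mom :: "(real \<Rightarrow> real) \<Rightarrow> real \<Rightarrow> ('n::finite \<Rightarrow> nat) \<Rightarrow> real" where
  "mom K e a = integral (ann e) (\<lambda>z. mnm a z * K (norm z))"

lemma continuous_mono: "continuous_on UNIV (mnm a)"
  unfolding mnm_def by (intro continuous_intros)

lemma mono_integrable:
  assumes Kc: "continuous_on {0<..} K" and e: "e > 0"
  shows "(\<lambda>z. mnm a z * K (norm z)) integrable_on ann e"
  by (rule lb_form(2)[OF Kc e continuous_mono])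

lemma mono_remove:
  "mnm a z = z$i ^ a i * (\<Prod>k\<in>UNIV-{i}. (z$k) ^ (a k))"
  unfolding mnm_def by (rule prod.remove) auto

lemma mom_odd:
  fixes K :: "real \<Rightarrow> real" and a :: "'n::finite \<Rightarrow> nat"
  assumes Kc: "continuous_on {0<..} K" and e: "e > 0" and odd: "odd (a i)"
  shows "mom K e a = 0"
proof -
  have m: "mnm a (rflx i z) = - mnm a z" for z
  proof -
    have "(\<Prod>k\<in>UNIV-{i}. (rflx i z $ k) ^ (a k)) = (\<Prod>k\<in>UNIV-{i}. (z $ k) ^ (a k))"
      by (rule prod.cong) (auto simp: rflx_def)
    moreover have "(rflx i z $ i) ^ a i = - (z$i ^ a i)"
      using odd by (simp add: rflx_def power_minus_odd)
    ultimately show ?thesis by (simp add: mono_remove[of _ _ i])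
  qed
  have "mom K e a = integral (ann e) (\<lambda>z. mnm a (rflx i z) * K (norm z))"
    unfolding mom_def
    by (rule inv_integral[symmetric, OF Kc e continuous_mono refl_lborel continuous_refl refl_norm])
  also have "\<dots> = integral (ann e) (\<lambda>z. - (mnm a z * K (norm z)))"
    by (simp add: m)
  also have "\<dots> = - mom K e a"
    unfolding mom_def by (rule integral_neg)
  finally show ?thesis by simp
qed

lemma mono_split2:
  fixes i j :: "'n::finite"
  assumes "i \<noteq> j"
  shows "mnm a z = z$i ^ a i * z$j ^ a j * (\<Prod>k\<in>UNIV-{i,j}. (z$k) ^ (a k))"
proof -
  have "(\<Prod>k\<in>UNIV-{i}. (z$k) ^ (a k)) = z$j ^ a j * (\<Prod>k\<in>UNIV-{i}-{j}. (z$k) ^ (a k))"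
    by (rule prod.remove) (use assms in auto)
  moreover have "UNIV-{i}-{j} = UNIV-{i,j}" by auto
  ultimately show ?thesis by (simp add: mono_remove[of _ _ i] mult.assoc)
qed

lemma rot_id: "rot i j 1 0 z = z"
  unfolding vec_eq_iff by (simp add: rot_nth)

lemma mom_rot:
  fixes K :: "real \<Rightarrow> real" and g :: "'n::finite \<Rightarrow> nat" and i j :: 'n
  assumes Kc: "continuous_on {0<..} K" and e: "e > 0" and Knn: "\<And>t. t > 0 \<Longrightarrow> K t \<ge> 0"
    and ij: "i \<noteq> j"
  shows "real (g j + 1) * mom K e (g(i := g i + 2)) = real (g i + 1) * mom K e (g(j := g j + 2))"
proof -
  define b where "b = g(i := g i + 1, j := g j + 1)"
  define p where "p = g i + 1"
  define q where "q = g j + 1"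
  define R where "R = (\<lambda>z::real^'n. \<Prod>k\<in>UNIV-{i,j}. (z$k) ^ (g k))"
  define \<phi> where "\<phi> = (\<lambda>t (z::real^'n). (cos t * z$i - sin t * z$j)^p * (sin t * z$i + cos t * z$j)^q * R z)"
  define \<phi>' where "\<phi>' = (\<lambda>t (z::real^'n).
     (real p * (cos t * z$i - sin t * z$j)^(p-1) * (- sin t * z$i - cos t * z$j) * (sin t * z$i + cos t * z$j)^q
      + (cos t * z$i - sin t * z$j)^p * (real q * (sin t * z$i + cos t * z$j)^(q-1) * (cos t * z$i - sin t * z$j))) * R z)"
  have bi: "b i = p" "b j = q" using ij by (auto simp: b_def p_def q_def)
  have Rb: "(\<Prod>k\<in>UNIV-{i,j}. (z$k) ^ (b k)) = R z" for z
    unfolding R_def by (rule prod.cong) (auto simp: b_def)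
  have phirot: "mnm b (rot i j (cos t) (sin t) z) = \<phi> t z" for t z
  proof -
    have "(\<Prod>k\<in>UNIV-{i,j}. (rot i j (cos t) (sin t) z $ k) ^ (b k)) = R z"
      unfolding Rb[symmetric] by (rule prod.cong) (auto simp: rot_nth)
    then show ?thesis using ij
      by (simp add: mono_split2[OF ij, of b] bi rot_nth \<phi>_def)
  qed
  have phi0: "\<phi> 0 z = mnm b z" for z
    using phirot[of 0 z] by (simp add: rot_id)
  have deriv: "((\<lambda>t. \<phi> t z) has_real_derivative \<phi>' t z) (at t)" for t z
    unfolding \<phi>_def \<phi>'_def
    by (auto intro!: derivative_eq_intros simp: algebra_simps)
  have phi'0: "\<phi>' 0 z = real q * mnm (g(i := g i + 2)) z - real p * mnm (g(j := g j + 2)) z" for z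
  proof -
    have m1: "mnm (g(i := g i + 2)) z = z$i ^ g i * (z$i * z$i) * z$j ^ g j * R z"
      using ij by (simp add: mono_split2[OF ij] R_def power_add power2_eq_square)
    have m2: "mnm (g(j := g j + 2)) z = z$i ^ g i * (z$j ^ g j * (z$j * z$j)) * R z"
      using ij by (simp add: mono_split2[OF ij] R_def power_add power2_eq_square)
    show ?thesis
      unfolding m1 m2 by (simp add: \<phi>'_def p_def q_def algebra_simps)
  qed
  have phic: "continuous_on UNIV (\<phi> t)" for t
    unfolding \<phi>_def R_def by (intro continuous_intros)
  have inv: "integral (ann e) (\<lambda>z. \<phi> t z * K (norm z)) = mom K e b" if "cos t \<noteq> -1" for t
  proof -
    have "integral (ann e) (\<lambda>z. mnm b (rot i j (cos t) (sin t) z) * K (norm z)) = mom K e b"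
      unfolding mom_def
      by (rule inv_integral[OF Kc e continuous_mono rot_lborel[OF ij _ that] continuous_rot rot_norm[OF ij]])
         simp_all
    then show ?thesis by (simp add: phirot)
  qed
  obtain B where B: "\<And>t z. t \<in> {0..1} \<Longrightarrow> z \<in> cball 0 (1/e) \<Longrightarrow> \<bar>\<phi>' t z\<bar> \<le> B"
  proof -
    have "continuous_on ({0..1} \<times> cball 0 (1/e)) (\<lambda>x. \<phi>' (fst x) (snd x))"
      unfolding \<phi>'_def R_def by (intro continuous_intros)
    then have "compact ((\<lambda>x. \<phi>' (fst x) (snd x)) ` ({0..1} \<times> cball 0 (1/e)))"
      by (intro compact_continuous_image compact_Times compact_Icc compact_cball)
    then obtain B where "\<forall>y \<in> (\<lambda>x. \<phi>' (fst x) (snd x)) ` ({0..1} \<times> cball 0 (1/e)). norm y \<le> B"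
      using compact_imp_bounded bounded_iff by metis
    then show ?thesis using that by force
  qed
  define th where "th = (\<lambda>k::nat. 1 / real (Suc k))"
  have th: "0 < th k" "th k \<le> 1" for k by (auto simp: th_def)
  have costh: "cos (th k) \<noteq> -1" for k
  proof -
    have "cos (th k) > 0" using th[of k] pi_gt3 by (intro cos_gt_zero) auto
    then show ?thesis by linarith
  qed
  define f where "f = (\<lambda>k z. (\<phi> (th k) z - \<phi> 0 z) / th k * K (norm z))"
  define G where "G = (\<lambda>z. \<phi>' 0 z * K (norm z))"
  define h where "h = (\<lambda>z::real^'n. B * K (norm z))"
  have intphi: "(\<lambda>z. \<phi> t z * K (norm z)) integrable_on ann e" for t
    by (rule lb_form(2)[OF Kc e phic])
  have feq: "f k = (\<lambda>z. (1 / th k) * (\<phi> (th k) z * K (norm z) - \<phi> 0 z * K (norm z)))" for k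
    using th(1)[of k] by (auto simp: f_def fun_eq_iff field_simps)
  have fint: "f k integrable_on ann e" for k
    unfolding feq by (intro integrable_on_mult_right integrable_diff intphi)
  have fint0: "integral (ann e) (f k) = 0" for k
  proof -
    have "integral (ann e) (f k) = (1 / th k) * (integral (ann e) (\<lambda>z. \<phi> (th k) z * K (norm z))
         - integral (ann e) (\<lambda>z. \<phi> 0 z * K (norm z)))"
      unfolding feq by (simp add: integral_diff intphi)
    also have "\<dots> = 0" using inv[OF costh[of k]] inv[of 0] by simp
    finally show ?thesis .
  qed
  have hint: "h integrable_on ann e"
    unfolding h_def using lb_form(2)[OF Kc e continuous_on_const[of UNIV B]] .
  have le: "norm (f k z) \<le> h z" if z: "z \<in> ann e" for k z
  proof -
    have zc: "z \<in> cball 0 (1/e)" using z by (auto simp: ann_def)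
    have Kz: "K (norm z) \<ge> 0" using z e by (intro Knn) (auto simp: mem_ann)
    obtain xi where xi: "0 < xi" "xi < th k" "\<phi> (th k) z - \<phi> 0 z = (th k - 0) * \<phi>' xi z"
      using MVT2[OF th(1)[of k], of "\<lambda>t. \<phi> t z" "\<lambda>t. \<phi>' t z"] deriv by blast
    have "\<bar>\<phi>' xi z\<bar> \<le> B" using xi th[of k] zc by (intro B) auto
    then have bd: "\<bar>(\<phi> (th k) z - \<phi> 0 z) / th k\<bar> \<le> B"
      using xi(3) th[of k] by (simp add: abs_mult)
    have "norm (f k z) = \<bar>(\<phi> (th k) z - \<phi> 0 z) / th k\<bar> * K (norm z)"
      using Kz unfolding f_def real_norm_def abs_mult by simp
    then show ?thesis
      unfolding h_def using mult_right_mono[OF bd Kz] by simp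
  qed
  have conv: "(\<lambda>k. f k z) \<longlonglongrightarrow> G z" for z
  proof -
    have d: "((\<lambda>h. (\<phi> (0 + h) z - \<phi> 0 z) / h) \<longlongrightarrow> \<phi>' 0 z) (at 0)"
      using deriv[of z 0] by (simp add: DERIV_def)
    have "filterlim th (at 0) sequentially"
    proof (rule filterlim_atI)
      show "th \<longlonglongrightarrow> 0" unfolding th_def by (rule LIMSEQ_Suc[OF lim_inverse_n'])
      show "\<forall>\<^sub>F k in sequentially. th k \<noteq> 0"
        using th(1) by (intro always_eventually) (metis less_irrefl)
    qed
    from filterlim_compose[OF d this]
    have "(\<lambda>k. (\<phi> (th k) z - \<phi> 0 z) / th k) \<longlonglongrightarrow> \<phi>' 0 z" by simp
    then show ?thesis unfolding f_def G_def by (intro tendsto_intros)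
  qed
  have DC: "(\<lambda>k. integral (ann e) (f k)) \<longlonglongrightarrow> integral (ann e) G"
    by (rule dominated_convergence(2)[OF fint hint le conv])
  then have "(\<lambda>k. 0::real) \<longlonglongrightarrow> integral (ann e) G" by (simp only: fint0)
  then have G0: "integral (ann e) G = 0"
    using LIMSEQ_unique[OF tendsto_const] by metis
  have Geq: "G = (\<lambda>z. real q * (mnm (g(i := g i + 2)) z * K (norm z)) - real p * (mnm (g(j := g j + 2)) z * K (norm z)))"
    by (auto simp: G_def phi'0 fun_eq_iff algebra_simps)
  have "integral (ann e) G = real q * mom K e (g(i := g i + 2)) - real p * mom K e (g(j := g j + 2))"
    unfolding Geq mom_def
    by (simp add: integral_diff integrable_on_mult_right mono_integrable[OF Kc e])
  then show ?thesis using G0 by (simp add: p_def q_def)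
qed

fun df :: "nat \<Rightarrow> real" where
  "df 0 = 1" | "df (Suc 0) = 0" | "df (Suc (Suc n)) = (real n + 1) * df n"

lemma df_odd: "odd n \<Longrightarrow> df n = 0"
  by (induction n rule: df.induct) auto

lemma df_even: "even n \<Longrightarrow> df n > 0"
  by (induction n rule: df.induct) auto

lemma df_Suc2: "df (n + 2) = (real n + 1) * df n"
  by (simp add: numeral_2_eq_2)

definition Dm :: "('n::finite \<Rightarrow> nat) \<Rightarrow> real" where
  "Dm a = (\<Prod>i\<in>UNIV. df (a i))"

lemma Dm_remove: "Dm a = df (a i) * (\<Prod>k\<in>UNIV-{i}. df (a k))"
  unfolding Dm_def by (rule prod.remove) auto

lemma Dm_up2: "Dm (g(i := g i + 2)) = (real (g i) + 1) * Dm g"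
proof -
  have "(\<Prod>k\<in>UNIV-{i}. df ((g(i := g i + 2)) k)) = (\<Prod>k\<in>UNIV-{i}. df (g k))"
    by (rule prod.cong) auto
  then show ?thesis
    by (simp add: Dm_remove[of _ i] df_Suc2 del: fun_upd_apply) (simp add: mult.assoc)
qed

lemma Dm_odd: "odd (a i) \<Longrightarrow> Dm a = 0"
  by (simp add: Dm_remove[of _ i] df_odd)

lemma sum_upd: fixes g :: "'n::finite \<Rightarrow> nat" shows "sum (g(i := v)) UNIV = sum g UNIV - g i + v"
proof -
  have "sum (g(i := v)) UNIV = v + sum g (UNIV - {i})"
    by (simp add: sum.remove[of UNIV i])
  moreover have "sum g UNIV = g i + sum g (UNIV - {i})"
    by (simp add: sum.remove[of UNIV i])
  ultimately show ?thesis by presburger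
qed

definition E :: "'n::finite \<Rightarrow> nat \<Rightarrow> ('n \<Rightarrow> nat)" where
  "E i0 k = (\<lambda>i. if i = i0 then k else 0)"

lemma Dm_E: "Dm (E i0 k) = df k"
proof -
  have "(\<Prod>j\<in>UNIV-{i0}. df (E i0 k j)) = 1"
    by (rule prod.neutral) (auto simp: E_def)
  then show ?thesis by (simp add: Dm_remove[of _ i0] E_def)
qed

lemma mom_formula:
  fixes K :: "real \<Rightarrow> real" and i0 :: "'n::finite"
  assumes Kc: "continuous_on {0<..} K" and e: "e > 0" and Knn: "\<And>t. t > 0 \<Longrightarrow> K t \<ge> 0"
  shows "sum a (UNIV::'n set) = k \<Longrightarrow> mom K e a * df k = mom K e (E i0 k) * Dm a"
proof (induction "k - a i0" arbitrary: a rule: less_induct)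
  case less
  show ?case
  proof (cases "\<forall>j. j \<noteq> i0 \<longrightarrow> a j = 0")
    case True
    have "sum a UNIV = a i0 + sum a (UNIV - {i0})" by (simp add: sum.remove[of UNIV i0])
    moreover have "sum a (UNIV - {i0}) = 0" using True by (intro sum.neutral) auto
    ultimately have "a i0 = k" using less.prems by simp
    then have "a = E i0 k" using True by (auto simp: E_def fun_eq_iff)
    then show ?thesis by (simp add: Dm_E)
  next
    case False
    then obtain j where j: "j \<noteq> i0" "a j \<noteq> 0" by auto
    show ?thesis
    proof (cases "odd (a j)")
      case True
      then show ?thesis by (simp add: mom_odd[OF Kc e, of a j, OF True] Dm_odd[of a j, OF True])
    next
      case False
      then have aj2: "a j \<ge> 2" using j(2) by presburger
      define g where "g = a(j := a j - 2)"
      have ag: "a = g(j := g j + 2)" using aj2 by (auto simp: g_def fun_eq_iff)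
      define a' where "a' = g(i0 := g i0 + 2)"
      have gi0: "g i0 = a i0" using j(1) by (simp add: g_def)
      have sa: "sum a UNIV = k" by (rule less.prems)
      have sum_ge: "sum a UNIV \<ge> a i0 + a j"
      proof -
        have "sum a UNIV = a i0 + sum a (UNIV - {i0})" by (simp add: sum.remove[of UNIV i0])
        moreover have "sum a (UNIV - {i0}) \<ge> a j"
          using j(1) by (intro member_le_sum) auto
        ultimately show ?thesis by simp
      qed
      have sg: "sum g UNIV = k - 2"
        using sa aj2 sum_ge sum_upd[of a j "a j - 2"] unfolding g_def by presburger
      have sa': "sum a' UNIV = k"
        using sg sum_upd[of g i0 "g i0 + 2"] sa sum_ge aj2 gi0
        unfolding a'_def by (simp add: member_le_sum)
      have lt: "k - a' i0 < k - a i0"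
        using sum_ge sa aj2 gi0 by (simp add: a'_def)
      have IH: "mom K e a' * df k = mom K e (E i0 k) * Dm a'"
        using less.hyps[OF lt sa'] .
      have rot: "real (g j + 1) * mom K e a' = real (g i0 + 1) * mom K e a"
        unfolding a'_def ag using mom_rot[OF Kc e Knn j(1)[symmetric], of g] by simp
      have D1: "Dm a' = (real (g i0) + 1) * Dm g" unfolding a'_def by (rule Dm_up2)
      have D2: "Dm a = (real (g j) + 1) * Dm g" unfolding ag by (rule Dm_up2)
      have "real (g i0 + 1) * (mom K e a * df k) = real (g j + 1) * (mom K e a' * df k)"
        using rot by simp
      also have "\<dots> = real (g j + 1) * (mom K e (E i0 k) * Dm a')" by (simp add: IH)
      also have "\<dots> = real (g i0 + 1) * (mom K e (E i0 k) * Dm a)"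
        by (simp add: D1 D2 algebra_simps)
      finally show ?thesis by simp
    qed
  qed
qed

lemma Dm_lower:
  "real (a i) * Dm a = real (a i) * (real (a i) - 1) * Dm (a(i := a i - 2))"
proof (cases "a i \<ge> 2")
  case True
  define g where "g = a(i := a i - 2)"
  have ag: "a = g(i := g i + 2)" using True by (auto simp: g_def fun_eq_iff)
  have "Dm a = (real (g i) + 1) * Dm g" unfolding ag by (rule Dm_up2)
  moreover have "real (g i) + 1 = real (a i) - 1" using True by (simp add: g_def of_nat_diff)
  ultimately show ?thesis by (simp add: g_def)
next
  case False
  then have "a i = 0 \<or> a i = 1" by auto
  then show ?thesis
  proof
    assume "a i = 1"
    then have "Dm a = 0" by (intro Dm_odd[of a i]) simp
    then show ?thesis using \<open>a i = 1\<close> by simp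
  qed simp
qed

definition pf :: "'j set \<Rightarrow> ('j \<Rightarrow> real) \<Rightarrow> ('j \<Rightarrow> ('n::finite \<Rightarrow> nat)) \<Rightarrow> real^'n \<Rightarrow> real" where
  "pf J c e z = (\<Sum>j\<in>J. c j * mnm (e j) z)"

lemma continuous_pf: "continuous_on UNIV (pf J c e)"
  unfolding pf_def mnm_def by (intro continuous_intros)

lemma I_pf:
  fixes K :: "real \<Rightarrow> real"
  assumes Kc: "continuous_on {0<..} K" and e: "\<epsilon> > 0" and J: "finite J"
  shows "integral (ann \<epsilon>) (\<lambda>z. pf J c ex z * K (norm z)) = (\<Sum>j\<in>J. c j * mom K \<epsilon> (ex j))"
proof -
  have "integral (ann \<epsilon>) (\<lambda>z. pf J c ex z * K (norm z))
      = integral (ann \<epsilon>) (\<lambda>z. \<Sum>j\<in>J. c j * (mnm (ex j) z * K (norm z)))"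
    by (simp add: pf_def sum_distrib_right mult.assoc)
  also have "\<dots> = (\<Sum>j\<in>J. integral (ann \<epsilon>) (\<lambda>z. c j * (mnm (ex j) z * K (norm z))))"
    by (rule integral_sum[OF J]) (intro integrable_on_mult_right mono_integrable[OF Kc e])
  also have "\<dots> = (\<Sum>j\<in>J. c j * mom K \<epsilon> (ex j))"
    by (simp add: mom_def)
  finally show ?thesis .
qed

lemma mono_scale: "mnm a (t *\<^sub>R z) = t ^ (sum a UNIV) * mnm a z"
  by (simp add: mnm_def power_mult_distrib prod.distrib power_sum)

lemma pf_scale:
  assumes "\<And>j. j \<in> J \<Longrightarrow> sum (ex j) UNIV = k"
  shows "pf J c ex (t *\<^sub>R z) = t ^ k * pf J c ex z"
  unfolding pf_def mono_scale sum_distrib_left using assms by (intro sum.cong) auto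

definition lapc :: "('j \<Rightarrow> real) \<Rightarrow> ('j \<Rightarrow> ('n::finite \<Rightarrow> nat)) \<Rightarrow> 'j \<times> 'n \<Rightarrow> real" where
  "lapc c ex p = c (fst p) * (real (ex (fst p) (snd p)) * (real (ex (fst p) (snd p)) - 1))"

definition lape :: "('j \<Rightarrow> ('n::finite \<Rightarrow> nat)) \<Rightarrow> 'j \<times> 'n \<Rightarrow> ('n \<Rightarrow> nat)" where
  "lape ex p = (ex (fst p))(snd p := ex (fst p) (snd p) - 2)"

lemma mono_shift:
  "mnm a (z + t *\<^sub>R axis i 1) = (z$i + t) ^ a i * (\<Prod>k\<in>UNIV-{i}. (z$k) ^ (a k))"
proof -
  have "(\<Prod>k\<in>UNIV-{i}. ((z + t *\<^sub>R axis i 1)$k) ^ (a k)) = (\<Prod>k\<in>UNIV-{i}. (z$k) ^ (a k))"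
    by (rule prod.cong) (auto simp: axis_def)
  then show ?thesis by (simp add: mono_remove[of _ _ i] axis_def)
qed

lemma lap_pf:
  assumes J: "finite J"
  shows "laplacian (pf J c ex) z = pf (J \<times> UNIV) (lapc c ex) (lape ex) z"
proof -
  have one: "(deriv ^^ 2) (\<lambda>t. pf J c ex (z + t *\<^sub>R axis i 1)) 0
     = (\<Sum>j\<in>J. c j * (real (ex j i) * (real (ex j i) - 1)) * mnm ((ex j)(i := ex j i - 2)) z)" for i
  proof -
    define R where "R = (\<lambda>j. \<Prod>k\<in>UNIV-{i}. (z$k) ^ (ex j k))"
    define F where "F = (\<lambda>t. \<Sum>j\<in>J. c j * ((z$i + t) ^ ex j i * R j))"
    define F1 where "F1 = (\<lambda>t. \<Sum>j\<in>J. c j * (real (ex j i) * (z$i + t) ^ (ex j i - 1) * R j))"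
    define F2 where "F2 = (\<lambda>t. \<Sum>j\<in>J. c j * (real (ex j i) * (real (ex j i - 1) * (z$i + t) ^ (ex j i - 1 - 1)) * R j))"
    have eqF: "(\<lambda>t. pf J c ex (z + t *\<^sub>R axis i 1)) = F"
      by (simp add: F_def pf_def mono_shift R_def fun_eq_iff)
    have d1: "(F has_real_derivative F1 t) (at t)" for t
      unfolding F_def F1_def by (auto intro!: derivative_eq_intros sum.cong simp: ac_simps)
    have d2: "(F1 has_real_derivative F2 t) (at t)" for t
      unfolding F1_def F2_def by (auto intro!: derivative_eq_intros sum.cong simp: ac_simps)
    have "deriv F = F1" using d1 by (auto intro!: DERIV_imp_deriv simp: fun_eq_iff)
    then have "(deriv ^^ 2) F 0 = F2 0"
      using DERIV_imp_deriv[OF d2] by (simp add: numeral_2_eq_2)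
    also have "\<dots> = (\<Sum>j\<in>J. c j * (real (ex j i) * (real (ex j i) - 1)) * mnm ((ex j)(i := ex j i - 2)) z)"
    proof (unfold F2_def, rule sum.cong[OF refl])
      fix j assume "j \<in> J"
      have m: "mnm ((ex j)(i := ex j i - 2)) z = z$i ^ (ex j i - 2) * R j"
      proof -
        have "(\<Prod>k\<in>UNIV-{i}. (z$k) ^ (((ex j)(i := ex j i - 2)) k)) = R j"
          unfolding R_def by (rule prod.cong) auto
        then show ?thesis by (simp add: mono_remove[of _ _ i])
      qed
      have r: "real (ex j i) * real (ex j i - 1) = real (ex j i) * (real (ex j i) - 1)"
        by (cases "ex j i") auto
      show "c j * (real (ex j i) * (real (ex j i - 1) * (z$i + 0) ^ (ex j i - 1 - 1)) * R j)
          = c j * (real (ex j i) * (real (ex j i) - 1)) * mnm ((ex j)(i := ex j i - 2)) z"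
        unfolding m using r by (simp add: numeral_2_eq_2 diff_diff_left mult.assoc[symmetric])
    qed
    finally show ?thesis unfolding eqF .
  qed
  have "laplacian (pf J c ex) z = (\<Sum>i\<in>UNIV. \<Sum>j\<in>J. c j * (real (ex j i) * (real (ex j i) - 1)) * mnm ((ex j)(i := ex j i - 2)) z)"
    unfolding laplacian_def one ..
  also have "\<dots> = (\<Sum>j\<in>J. \<Sum>i\<in>UNIV. c j * (real (ex j i) * (real (ex j i) - 1)) * mnm ((ex j)(i := ex j i - 2)) z)"
    by (rule sum.swap)
  also have "\<dots> = pf (J \<times> UNIV) (lapc c ex) (lape ex) z"
    unfolding pf_def sum.cartesian_product lapc_def lape_def by (rule sum.cong) (auto simp: split_beta)
  finally show ?thesis .
qed

lemma key_identity:
  fixes K :: "real \<Rightarrow> real" and i0 :: "'n::finite" and ex :: "'j \<Rightarrow> ('n \<Rightarrow> nat)"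
  assumes Kc: "continuous_on {0<..} K" and e: "\<epsilon> > 0" and Knn: "\<And>t. t > 0 \<Longrightarrow> K t \<ge> 0"
    and J: "finite J" and deg: "\<And>j. j \<in> J \<Longrightarrow> sum (ex j) UNIV = k" and k2: "k \<ge> 2" and ev: "even k"
  shows "real k * (mom K \<epsilon> (E i0 (k-2)) / df (k-2)) * (\<Sum>j\<in>J. c j * mom K \<epsilon> (ex j))
       = (mom K \<epsilon> (E i0 k) / df k) * (\<Sum>p\<in>J \<times> UNIV. lapc c ex p * mom K \<epsilon> (lape ex p))"
proof -
  define A where "A = mom K \<epsilon> (E i0 (k-2)) / df (k-2)"
  define B where "B = mom K \<epsilon> (E i0 k) / df k"
  have dfk: "df k > 0" using df_even[OF ev] .
  have dfk2: "df (k-2) > 0" using df_even ev k2 by simp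
  have momB: "mom K \<epsilon> a = B * Dm a" if "sum a UNIV = k" for a :: "'n \<Rightarrow> nat"
    using mom_formula[OF Kc e Knn that, of i0] dfk by (simp add: B_def field_simps)
  have momA: "mom K \<epsilon> a = A * Dm a" if "sum a UNIV = k - 2" for a :: "'n \<Rightarrow> nat"
    using mom_formula[OF Kc e Knn that, of i0] dfk2 by (simp add: A_def field_simps)
  have trm: "B * (\<Sum>i\<in>UNIV. lapc c ex (j, i) * mom K \<epsilon> (lape ex (j, i))) = real k * A * (c j * mom K \<epsilon> (ex j))"
    if j: "j \<in> J" for j
  proof -
    define a where "a = ex j"
    have sa: "sum a UNIV = k" using deg[OF j] by (simp add: a_def)
    have t1: "real (a i) * (real (a i) - 1) * mom K \<epsilon> (a(i := a i - 2)) = A * (real (a i) * Dm a)" for i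
    proof (cases "a i \<ge> 2")
      case True
      have "sum (a(i := a i - 2)) UNIV = k - 2"
        using sum_upd[of a i "a i - 2"] sa True member_le_sum[of i UNIV a] by simp
      then have "mom K \<epsilon> (a(i := a i - 2)) = A * Dm (a(i := a i - 2))" by (rule momA)
      then have "real (a i) * (real (a i) - 1) * mom K \<epsilon> (a(i := a i - 2))
          = A * (real (a i) * (real (a i) - 1) * Dm (a(i := a i - 2)))" by simp
      also have "\<dots> = A * (real (a i) * Dm a)" using Dm_lower[of a i] by (simp only: mult.assoc)
      finally show ?thesis .
    next
      case False
      then have "a i = 0 \<or> a i = 1" by auto
      then show ?thesis
      proof
        assume "a i = 1" then have "Dm a = 0" by (intro Dm_odd[of a i]) simp
        then show ?thesis using \<open>a i = 1\<close> by simp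
      qed simp
    qed
    have "B * (\<Sum>i\<in>UNIV. lapc c ex (j, i) * mom K \<epsilon> (lape ex (j, i)))
        = B * (\<Sum>i\<in>UNIV. c j * (real (a i) * (real (a i) - 1) * mom K \<epsilon> (a(i := a i - 2))))"
      by (simp add: lapc_def lape_def a_def mult.assoc)
    also have "\<dots> = B * (\<Sum>i\<in>UNIV. c j * (A * (real (a i) * Dm a)))" by (simp add: t1)
    also have "\<dots> = c j * A * (B * Dm a) * real (sum a UNIV)"
      by (simp add: sum_distrib_left sum_distrib_right of_nat_sum ac_simps)
    also have "\<dots> = real k * A * (c j * mom K \<epsilon> (ex j))"
      using sa momB[OF sa] by (simp add: a_def)
    finally show ?thesis .
  qed
  have "B * (\<Sum>p\<in>J \<times> UNIV. lapc c ex p * mom K \<epsilon> (lape ex p))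
      = (\<Sum>j\<in>J. B * (\<Sum>i\<in>UNIV. lapc c ex (j, i) * mom K \<epsilon> (lape ex (j, i))))"
    by (simp add: sum.cartesian_product sum_distrib_left)
  also have "\<dots> = (\<Sum>j\<in>J. real k * A * (c j * mom K \<epsilon> (ex j)))"
    by (rule sum.cong[OF refl]) (rule trm)
  finally show ?thesis
    by (simp add: A_def[symmetric] B_def[symmetric] sum_distrib_left)
qed

lemma odd_moments:
  fixes K :: "real \<Rightarrow> real" and ex :: "'j \<Rightarrow> ('n::finite \<Rightarrow> nat)"
  assumes Kc: "continuous_on {0<..} K" and e: "\<epsilon> > 0"
    and deg: "\<And>j. j \<in> J \<Longrightarrow> sum (ex j) UNIV = k" and od: "odd k"
  shows "(\<Sum>j\<in>J. c j * mom K \<epsilon> (ex j)) = 0"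
proof (rule sum.neutral, rule ballI)
  fix j assume j: "j \<in> J"
  have "\<exists>i. odd (ex j i)"
  proof (rule ccontr)
    assume "\<not> (\<exists>i. odd (ex j i))"
    then have "even (sum (ex j) UNIV)" by (intro dvd_sum) auto
    with deg[OF j] od show False by simp
  qed
  then obtain i where "odd (ex j i)" by blast
  then show "c j * mom K \<epsilon> (ex j) = 0" using mom_odd[OF Kc e, of "ex j" i] by simp
qed

lemma mono_E: "mnm (E i0 k) z = z$i0 ^ k"
proof -
  have "(\<Prod>j\<in>UNIV-{i0}. (z$j) ^ (E i0 k j)) = 1"
    by (rule prod.neutral) (auto simp: E_def)
  then show ?thesis by (simp add: mono_remove[of _ _ i0] E_def)
qed

lemma pos_mom:
  fixes K :: "real \<Rightarrow> real" and i0 :: "'n::finite"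
  assumes Kc: "continuous_on {0<..} K" and Knn: "\<And>t. t > 0 \<Longrightarrow> K t \<ge> 0"
    and t0: "t0 > 0" "K t0 > 0" and ev: "even k"
  shows "\<exists>\<epsilon>0>0. \<exists>c>0. \<forall>\<epsilon>. 0 < \<epsilon> \<and> \<epsilon> \<le> \<epsilon>0 \<longrightarrow> mom K \<epsilon> (E i0 k) \<ge> c"
proof -
  define p :: "real^'n" where "p = t0 *\<^sub>R axis i0 1"
  define g where "g = (\<lambda>z::real^'n. z$i0 ^ k * K (norm z))"
  have np: "norm p = t0" using t0 by (simp add: p_def)
  have gp: "g p = t0 ^ k * K t0" by (simp add: g_def np) (simp add: p_def axis_def)
  have gp0: "g p > 0" using gp t0 by simp
  have cK: "isCont K t0"
    using Kc t0 by (simp add: continuous_on_eq_continuous_at)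
  have "isCont g p"
    unfolding g_def by (intro continuous_intros continuous_at_compose[of _ norm K, unfolded o_def]) (simp_all add: np cK)
  then obtain d where d: "d > 0" "\<And>z. dist z p < d \<Longrightarrow> dist (g z) (g p) < g p / 2"
    using gp0 unfolding continuous_at_eps_delta by (metis half_gt_zero)
  define r where "r = min d (t0/2)"
  have r: "r > 0" using d t0 by (simp add: r_def)
  define e0 where "e0 = min (t0/2) (1/(2*t0))"
  have e0: "e0 > 0" using t0 by (simp add: e0_def)
  define c where "c = measure lborel (ball p r) * (g p / 2)"
  have c: "c > 0" using content_ball_pos[OF r] gp0 by (simp add: c_def)
  have "mom K \<epsilon> (E i0 k) \<ge> c" if eps: "0 < \<epsilon>" "\<epsilon> \<le> e0" for \<epsilon>
  proof -
    have ballsub: "ball p r \<subseteq> ann \<epsilon>"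
    proof
      fix z assume "z \<in> ball p r"
      then have "norm (z - p) < r" by (simp add: dist_norm norm_minus_commute)
      then have "\<bar>norm z - t0\<bar> < r" using np norm_triangle_ineq3[of z p] by linarith
      moreover have "r \<le> t0/2" by (simp add: r_def)
      ultimately have "\<bar>norm z - t0\<bar> < t0/2" by linarith
      then have "t0/2 < norm z" "norm z < 3/2 * t0" by linarith+
      moreover have "\<epsilon> \<le> t0/2" using eps e0_def by simp
      moreover have "1/\<epsilon> \<ge> 2 * t0"
      proof -
        have "\<epsilon> \<le> 1/(2*t0)" using eps e0_def by simp
        then show ?thesis using eps t0 by (simp add: field_simps)
      qed
      ultimately show "z \<in> ann \<epsilon>" using t0 by (auto simp: mem_ann)
    qed
    have fint: "g integrable_on ann \<epsilon>"
      using mono_integrable[OF Kc eps(1), of "E i0 k"] by (simp add: mono_E g_def)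
    define h where "h = (\<lambda>z. if z \<in> ball p r then g p / 2 else 0)"
    have hint: "h integrable_on ann \<epsilon>"
    proof -
      have "(\<lambda>z. g p / 2) integrable_on (ball p r \<inter> ann \<epsilon>)"
        using ballsub by (intro integrable_on_const) (simp add: Int_absorb2)
      then show ?thesis unfolding h_def by (simp only: integrable_restrict_Int)
    qed
    have hval: "integral (ann \<epsilon>) h = c"
    proof -
      have "integral (ann \<epsilon>) h = integral (ball p r) (\<lambda>z. g p / 2)"
        unfolding h_def integral_restrict_Int using ballsub by (simp add: Int_absorb2)
      also have "\<dots> = measure lebesgue (ball p r) * (g p / 2)"
        using lmeasure_integral[of "ball p r"] integral_mult_left[of "ball p r" "\<lambda>x. 1" "g p / 2"] by simp
      also have "\<dots> = c" by (simp add: c_def measure_completion)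
      finally show ?thesis .
    qed
    have le: "h z \<le> g z" if z: "z \<in> ann \<epsilon>" for z
    proof (cases "z \<in> ball p r")
      case True
      then have "dist z p < d" using r_def by (simp add: dist_commute)
      then have "dist (g z) (g p) < g p / 2" using d(2) by blast
      then have "\<bar>g z - g p\<bar> < g p / 2" by (simp add: dist_real_def)
      then have "g p / 2 \<le> g z" by linarith
      then show ?thesis using True by (simp add: h_def)
    next
      case False
      have "K (norm z) \<ge> 0" using z eps by (intro Knn) (auto simp: mem_ann)
      then have "g z \<ge> 0" using ev by (simp add: g_def zero_le_even_power)
      then show ?thesis using False by (simp add: h_def)
    qed
    have "c \<le> integral (ann \<epsilon>) g"
      using integral_le[OF hint fint le] hval by simp
    then show ?thesis by (simp add: mom_def mono_E g_def)
  qed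
  then show ?thesis using e0 c by blast
qed

lemma vander_lim:
  fixes c :: "nat \<Rightarrow> 'a \<Rightarrow> real"
  assumes "\<And>x. ((\<lambda>y. \<Sum>i\<le>d. c i y * x ^ i) \<longlongrightarrow> 0) F"
  shows "i \<le> d \<Longrightarrow> (c i \<longlongrightarrow> 0) F"
  using assms
proof (induction d arbitrary: c i)
  case 0
  then show ?case using "0.prems"(2)[of 1] by simp
next
  case (Suc d)
  define c' where "c' = (\<lambda>i y. c i y * (2 ^ i - 2 ^ Suc d))"
  have lim': "((\<lambda>y. \<Sum>i\<le>d. c' i y * x ^ i) \<longlongrightarrow> 0) F" for x
  proof -
    have "((\<lambda>y. (\<Sum>i\<le>Suc d. c i y * (2*x) ^ i) - 2 ^ Suc d * (\<Sum>i\<le>Suc d. c i y * x ^ i)) \<longlongrightarrow> 0 - 2 ^ Suc d * 0) F"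
      by (intro tendsto_intros Suc.prems(2))
    moreover have "(\<Sum>i\<le>Suc d. c i y * (2*x) ^ i) - 2 ^ Suc d * (\<Sum>i\<le>Suc d. c i y * x ^ i)
        = (\<Sum>i\<le>d. c' i y * x ^ i)" for y
    proof -
      have "(\<Sum>i\<le>Suc d. c i y * (2*x) ^ i) - 2 ^ Suc d * (\<Sum>i\<le>Suc d. c i y * x ^ i)
          = (\<Sum>i\<le>Suc d. c i y * (2 ^ i - 2 ^ Suc d) * x ^ i)"
        by (simp add: sum_distrib_left sum_subtractf[symmetric] power_mult_distrib algebra_simps)
      also have "\<dots> = (\<Sum>i\<le>d. c' i y * x ^ i)"
        by (simp add: c'_def)
      finally show ?thesis .
    qed
    ultimately show ?thesis by simp
  qed
  have cd: "(c i \<longlongrightarrow> 0) F" if "i \<le> d" for i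
  proof -
    have "(c' i \<longlongrightarrow> 0) F" by (rule Suc.IH[OF that lim'])
    moreover have "(2::real) ^ i - 2 ^ Suc d \<noteq> 0"
    proof -
      have "(2::real) ^ i < 2 ^ Suc d" using that by (intro power_strict_increasing) auto
      then show ?thesis by simp
    qed
    ultimately have "((\<lambda>y. c' i y / (2 ^ i - 2 ^ Suc d)) \<longlongrightarrow> 0 / (2 ^ i - 2 ^ Suc d)) F"
      by (intro tendsto_intros) auto
    then show ?thesis using \<open>(2::real) ^ i - 2 ^ Suc d \<noteq> 0\<close> by (simp add: c'_def)
  qed
  show ?case
  proof (cases "i \<le> d")
    case True then show ?thesis by (rule cd)
  next
    case False
    then have i: "i = Suc d" using Suc.prems(1) by simp
    have "((\<lambda>y. (\<Sum>i\<le>Suc d. c i y * 1 ^ i) - (\<Sum>i\<le>d. c i y)) \<longlongrightarrow> 0 - (\<Sum>i\<le>d. 0)) F"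
      by (intro tendsto_intros Suc.prems(2) cd) auto
    then show ?thesis unfolding i by simp
  qed
qed

definition Am :: "nat \<Rightarrow> ('n::finite \<Rightarrow> nat) set" where
  "Am m = {a. sum a UNIV = m}"

lemma finite_Am: "finite (Am m :: ('n::finite \<Rightarrow> nat) set)"
proof (rule finite_subset)
  show "Am m \<subseteq> PiE (UNIV::'n set) (\<lambda>_. {..m})"
  proof
    fix a :: "'n \<Rightarrow> nat" assume "a \<in> Am m"
    then have "a i \<le> m" for i using member_le_sum[of i UNIV a] by (simp add: Am_def)
    then show "a \<in> PiE UNIV (\<lambda>_. {..m})" by (simp add: PiE_UNIV_domain)
  qed
  show "finite (PiE (UNIV::'n set) (\<lambda>_. {..m}))" by (intro finite_PiE) auto
qed

definition JJ :: "nat \<Rightarrow> (('n::finite \<Rightarrow> nat) \<times> ('n \<Rightarrow> nat)) set" where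
  "JJ m = Sigma (Am m) (\<lambda>a. PiE UNIV (\<lambda>i. {..a i}))"

lemma finite_JJ: "finite (JJ m :: (('n::finite \<Rightarrow> nat) \<times> ('n \<Rightarrow> nat)) set)"
  unfolding JJ_def by (intro finite_SigmaI finite_Am finite_PiE) auto

lemma JJ_le: "p \<in> JJ m \<Longrightarrow> snd p i \<le> fst p i"
  by (auto simp: JJ_def PiE_UNIV_domain)

lemma JJ_deg: "p \<in> JJ m \<Longrightarrow> sum (snd p) UNIV \<le> m"
proof -
  assume p: "p \<in> JJ m"
  have "sum (snd p) UNIV \<le> sum (fst p) UNIV" by (intro sum_mono JJ_le[OF p])
  also have "\<dots> = m" using p by (auto simp: JJ_def Am_def)
  finally show ?thesis .
qed

lemma JJ_deg': "(a, d) \<in> JJ m \<Longrightarrow> sum d UNIV \<le> m"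
  using JJ_deg[of "(a, d)"] by simp

definition cf :: "(('n::finite \<Rightarrow> nat) \<Rightarrow> real) \<Rightarrow> real^'n \<Rightarrow> ('n \<Rightarrow> nat) \<times> ('n \<Rightarrow> nat) \<Rightarrow> real" where
  "cf b x p = b (fst p) * (\<Prod>i\<in>UNIV. real (fst p i choose snd p i) * (x$i) ^ (fst p i - snd p i))"

lemma expansion:
  fixes b :: "('n::finite \<Rightarrow> nat) \<Rightarrow> real"
  shows "(\<Sum>a\<in>Am m. b a * mnm a (x + z)) = pf (JJ m) (cf b x) snd z"
proof -
  have one: "mnm a (x + z) = (\<Sum>d\<in>PiE UNIV (\<lambda>i. {..a i}). (\<Prod>i\<in>UNIV. real (a i choose d i) * (x$i) ^ (a i - d i)) * mnm d z)" for a
  proof -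
    have bin: "(x$i + z$i) ^ n = (\<Sum>d\<le>n. real (n choose d) * (z$i) ^ d * (x$i) ^ (n - d))" for i n
      using binomial_ring[of "z$i" "x$i" n] by (simp add: add.commute)
    have "mnm a (x + z) = (\<Prod>i\<in>UNIV. \<Sum>d\<le>a i. real (a i choose d) * (z$i) ^ d * (x$i) ^ (a i - d))"
      unfolding mnm_def by (rule prod.cong[OF refl]) (simp add: bin)
    also have "\<dots> = (\<Sum>d\<in>PiE UNIV (\<lambda>i. {..a i}). \<Prod>i\<in>UNIV. real (a i choose d i) * (z$i) ^ d i * (x$i) ^ (a i - d i))"
      by (rule prod_sum_PiE) auto
    also have "\<dots> = (\<Sum>d\<in>PiE UNIV (\<lambda>i. {..a i}). (\<Prod>i\<in>UNIV. real (a i choose d i) * (x$i) ^ (a i - d i)) * mnm d z)"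
      by (rule sum.cong[OF refl]) (simp add: mnm_def prod.distrib[symmetric] ac_simps)
    finally show ?thesis .
  qed
  have "(\<Sum>a\<in>Am m. b a * mnm a (x + z))
      = (\<Sum>a\<in>Am m. \<Sum>d\<in>PiE UNIV (\<lambda>i. {..a i}). b a * ((\<Prod>i\<in>UNIV. real (a i choose d i) * (x$i) ^ (a i - d i)) * mnm d z))"
    by (simp add: one sum_distrib_left)
  also have "\<dots> = (\<Sum>p\<in>JJ m. cf b x p * mnm (snd p) z)"
    unfolding JJ_def cf_def
    by (subst sum.Sigma) (auto intro!: finite_Am finite_PiE sum.cong simp: split_beta mult.assoc)
  finally show ?thesis by (simp add: pf_def)
qed

definition Jk :: "nat \<Rightarrow> nat \<Rightarrow> (('n::finite \<Rightarrow> nat) \<times> ('n \<Rightarrow> nat)) set" where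
  "Jk m k = {p \<in> JJ m. sum (snd p) UNIV = k}"

lemma finite_Jk: "finite (Jk m k :: (('n::finite \<Rightarrow> nat) \<times> ('n \<Rightarrow> nat)) set)"
  unfolding Jk_def by (rule finite_subset[OF _ finite_JJ]) auto

lemma pf_group:
  fixes c :: "('n::finite \<Rightarrow> nat) \<times> ('n \<Rightarrow> nat) \<Rightarrow> real"
  shows "pf (JJ m) c snd z = (\<Sum>k\<le>m. pf (Jk m k) c snd z)"
  unfolding pf_def Jk_def
  by (rule sum.group[symmetric]) (auto simp: finite_JJ JJ_deg')

lemma lap_group:
  fixes c :: "('n::finite \<Rightarrow> nat) \<times> ('n \<Rightarrow> nat) \<Rightarrow> real"
  shows "pf (JJ m \<times> UNIV) (lapc c snd) (lape snd) z = (\<Sum>k\<le>m. pf (Jk m k \<times> UNIV) (lapc c snd) (lape snd) z)"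
proof -
  have "pf (JJ m \<times> UNIV) (lapc c snd) (lape snd) z
     = (\<Sum>k\<le>m. \<Sum>q\<in>{q \<in> JJ m \<times> UNIV. sum (snd (fst q)) UNIV = k}. lapc c snd q * mnm (lape snd q) z)"
    unfolding pf_def
    by (rule sum.group[symmetric]) (auto simp: finite_JJ JJ_deg')
  also have "\<dots> = (\<Sum>k\<le>m. pf (Jk m k \<times> UNIV) (lapc c snd) (lape snd) z)"
  proof (rule sum.cong[OF refl])
    fix k
    have eqset: "{q \<in> JJ m \<times> UNIV. sum (snd (fst q)) UNIV = k} = Jk m k \<times> UNIV"
      by (auto simp: Jk_def)
    show "(\<Sum>q\<in>{q \<in> JJ m \<times> UNIV. sum (snd (fst q)) UNIV = k}. lapc c snd q * mnm (lape snd q) z)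
      = pf (Jk m k \<times> UNIV) (lapc c snd) (lape snd) z" unfolding pf_def eqset[symmetric] by (rule refl)
  qed
  finally show ?thesis .
qed

lemma cf_scale:
  assumes p: "p \<in> Jk m k"
  shows "cf b (s *\<^sub>R x) p = s ^ (m - k) * cf b x p"
proof -
  have pJ: "p \<in> JJ m" and dk: "sum (snd p) UNIV = k" using p by (auto simp: Jk_def)
  have am: "sum (fst p) UNIV = m" using pJ by (auto simp: JJ_def Am_def)
  have "(\<Sum>i\<in>UNIV. fst p i - snd p i) = sum (fst p) UNIV - sum (snd p) UNIV"
    by (rule sum_subtractf_nat) (use JJ_le[OF pJ] in auto)
  then have sd: "(\<Sum>i\<in>UNIV. fst p i - snd p i) = m - k" using am dk by simp
  have "(\<Prod>i\<in>UNIV. real (fst p i choose snd p i) * ((s *\<^sub>R x)$i) ^ (fst p i - snd p i))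
      = (\<Prod>i\<in>UNIV. s ^ (fst p i - snd p i)) * (\<Prod>i\<in>UNIV. real (fst p i choose snd p i) * (x$i) ^ (fst p i - snd p i))"
    by (simp add: prod.distrib[symmetric] power_mult_distrib ac_simps)
  also have "(\<Prod>i\<in>UNIV. s ^ (fst p i - snd p i)) = s ^ (m - k)"
    by (simp add: power_sum[symmetric] sd)
  finally show ?thesis by (simp add: cf_def ac_simps)
qed

lemma lap_scale:
  fixes ex :: "'j \<Rightarrow> ('n::finite \<Rightarrow> nat)"
  assumes deg: "\<And>j. j \<in> J \<Longrightarrow> sum (ex j) UNIV = k"
  shows "pf (J \<times> UNIV) (lapc c ex) (lape ex) (t *\<^sub>R z) = t ^ (k - 2) * pf (J \<times> UNIV) (lapc c ex) (lape ex) z"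
  unfolding pf_def sum_distrib_left
proof (rule sum.cong[OF refl])
  fix q :: "'j \<times> 'n" assume q: "q \<in> J \<times> UNIV"
  show "lapc c ex q * mnm (lape ex q) (t *\<^sub>R z) = t ^ (k - 2) * (lapc c ex q * mnm (lape ex q) z)"
  proof (cases "ex (fst q) (snd q) \<ge> 2")
    case True
    have "sum (lape ex q) UNIV = k - 2"
      using sum_upd[of "ex (fst q)" "snd q" "ex (fst q) (snd q) - 2"] deg[of "fst q"] q True
        member_le_sum[of "snd q" UNIV "ex (fst q)"]
      by (auto simp: lape_def)
    then show ?thesis by (simp add: mono_scale)
  next
    case False
    then have "ex (fst q) (snd q) = 0 \<or> ex (fst q) (snd q) = 1" by auto
    then have "lapc c ex q = 0" by (auto simp: lapc_def)
    then show ?thesis by simp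
  qed
qed

lemma lap_low:
  assumes deg: "\<And>j. j \<in> J \<Longrightarrow> sum (ex j) (UNIV::'n::finite set) = k" and k: "k < 2"
  shows "pf (J \<times> UNIV) (lapc c ex) (lape ex) z = 0"
  unfolding pf_def
proof (rule sum.neutral, rule ballI)
  fix q :: "_ \<times> 'n" assume q: "q \<in> J \<times> UNIV"
  have "ex (fst q) (snd q) \<le> k" using member_le_sum[of "snd q" UNIV "ex (fst q)"] deg[of "fst q"] q by auto
  then have "ex (fst q) (snd q) = 0 \<or> ex (fst q) (snd q) = 1" using k by auto
  then show "lapc c ex q * mnm (lape ex q) z = 0" by (auto simp: lapc_def)
qed

context
  fixes b :: "('n::finite \<Rightarrow> nat) \<Rightarrow> real" and m :: nat and u :: "real^'n \<Rightarrow> real"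
  assumes u_def: "u = (\<lambda>x. \<Sum>a\<in>Am m. b a * mnm a x)"
begin

lemma u_shift: "u (x + z) = (\<Sum>k\<le>m. pf (Jk m k) (cf b x) snd z)"
  unfolding u_def expansion pf_group ..

lemma lap_shift:
  "laplacian u (x + z) = (\<Sum>k\<le>m. pf (Jk m k \<times> UNIV) (lapc (cf b x) snd) (lape snd) z)"
proof -
  have "laplacian u (x + z) = laplacian (\<lambda>w. u (x + w)) z"
    unfolding laplacian_def by (simp add: add.assoc)
  also have "(\<lambda>w. u (x + w)) = pf (JJ m) (cf b x) snd"
    unfolding u_def expansion ..
  also have "laplacian (pf (JJ m) (cf b x) snd) z = pf (JJ m \<times> UNIV) (lapc (cf b x) snd) (lape snd) z"
    by (rule lap_pf[OF finite_JJ])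
  finally show ?thesis unfolding lap_group .
qed

lemma Jk_deg: "p \<in> Jk m k \<Longrightarrow> sum (snd p) UNIV = k"
  by (simp add: Jk_def)

lemma pf_zero: "k \<noteq> 0 \<Longrightarrow> pf (Jk m k) c snd 0 = 0"
  using pf_scale[of "Jk m k" snd k c 0 0, OF Jk_deg] by (simp add: power_0_left)

lemma H0: "pf (Jk m 0) (cf b x) snd z = u x"
proof -
  have "pf (Jk m 0) (cf b x) snd z = pf (Jk m 0) (cf b x) snd (0 *\<^sub>R z)"
    using pf_scale[of "Jk m 0" snd 0 "cf b x" 0 z, OF Jk_deg] by simp
  also have "\<dots> = (\<Sum>k\<le>m. pf (Jk m k) (cf b x) snd 0)"
  proof -
    have "(\<Sum>k\<le>m. pf (Jk m k) (cf b x) snd 0) = pf (Jk m 0) (cf b x) snd 0 + (\<Sum>k\<in>{..m}-{0}. pf (Jk m k) (cf b x) snd 0)"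
      by (rule sum.remove) auto
    also have "(\<Sum>k\<in>{..m}-{0}. pf (Jk m k) (cf b x) snd 0) = 0"
      by (rule sum.neutral) (auto intro: pf_zero)
    finally show ?thesis by simp
  qed
  also have "\<dots> = u x" using u_shift[of x 0] by simp
  finally show ?thesis .
qed

lemma u_diff: "u y - u (y + z) = - (\<Sum>k\<le>m. if k = 0 then 0 else pf (Jk m k) (cf b y) snd z)"
proof -
  have "u (y + z) = pf (Jk m 0) (cf b y) snd z + (\<Sum>k\<in>{..m}-{0}. pf (Jk m k) (cf b y) snd z)"
    unfolding u_shift by (rule sum.remove) auto
  moreover have "(\<Sum>k\<le>m. if k = 0 then 0 else pf (Jk m k) (cf b y) snd z)
       = (\<Sum>k\<in>{..m}-{0}. pf (Jk m k) (cf b y) snd z)"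
    by (subst sum.remove[of _ 0]) auto
  ultimately show ?thesis by (simp add: H0)
qed

lemma LK_expand:
  fixes K :: "real \<Rightarrow> real"
  assumes Kc: "continuous_on {0<..} K" and e: "\<epsilon> > 0"
  shows "LK_trunc K u y \<epsilon> = - (\<Sum>k\<le>m. if k = 0 then 0 else \<Sum>p\<in>Jk m k. cf b y p * mom K \<epsilon> (snd p))"
proof -
  have "LK_trunc K u y \<epsilon> = integral (ann \<epsilon>) (\<lambda>z. (u y - u (y + z)) * K (norm z))"
    by (simp add: LK_trunc_def ann_def)
  also have "\<dots> = integral (ann \<epsilon>) (\<lambda>z. - (\<Sum>k\<le>m. (if k = 0 then 0 else pf (Jk m k) (cf b y) snd z) * K (norm z)))"
    by (simp add: u_diff sum_distrib_right)
  also have "\<dots> = - (\<Sum>k\<le>m. integral (ann \<epsilon>) (\<lambda>z. (if k = 0 then 0 else pf (Jk m k) (cf b y) snd z) * K (norm z)))"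
  proof -
    have c: "continuous_on UNIV (\<lambda>z. if k = 0 then 0 else pf (Jk m k) (cf b y) snd z)" for k
      by (cases "k = 0") (simp_all add: continuous_pf)
    show ?thesis
      by (subst integral_neg, subst integral_sum)
         (auto intro!: lb_form(2)[OF Kc e] c simp del: integral_neg)
  qed
  also have "\<dots> = - (\<Sum>k\<le>m. if k = 0 then 0 else \<Sum>p\<in>Jk m k. cf b y p * mom K \<epsilon> (snd p))"
    by (rule arg_cong[where f=uminus], rule sum.cong[OF refl]) (auto simp: I_pf[OF Kc e finite_Jk])
  finally show ?thesis .
qed

end

context
  fixes b :: "('n::finite \<Rightarrow> nat) \<Rightarrow> real" and m :: nat and u :: "real^'n \<Rightarrow> real"
  assumes u_def: "u = (\<lambda>x. \<Sum>a\<in>Am m. b a * mnm a x)"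
begin

lemma G_scale:
  "pf (Jk m k \<times> UNIV) (lapc c snd) (lape snd) (t *\<^sub>R z) = t ^ (k - 2) * pf (Jk m k \<times> UNIV) (lapc c snd) (lape snd) z"
  by (rule lap_scale) (simp add: Jk_def)

lemma G_low: "k < 2 \<Longrightarrow> pf (Jk m k \<times> (UNIV::'n set)) (lapc c snd) (lape snd) z = 0"
  by (rule lap_low) (auto simp: Jk_def)

lemma lap_at: "laplacian u x = pf (Jk m 2 \<times> UNIV) (lapc (cf b x) snd) (lape snd) z"
proof -
  let ?G = "\<lambda>k z. pf (Jk m k \<times> (UNIV::'n set)) (lapc (cf b x) snd) (lape snd) z"
  have Gk0: "?G k 0 = (if k = 2 then ?G 2 0 else 0)" for k
  proof (cases "k < 2")
    case True then show ?thesis using G_low by auto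
  next
    case False
    then show ?thesis using G_scale[of k "cf b x" 0 0] by (auto simp: power_0_left)
  qed
  have "laplacian u x = laplacian u (x + 0)" by simp
  also have "\<dots> = (\<Sum>k\<le>m. ?G k 0)" by (rule lap_shift[OF u_def])
  also have "\<dots> = (\<Sum>k\<le>m. if k = 2 then ?G 2 0 else 0)" by (rule sum.cong[OF refl]) (rule Gk0)
  also have "\<dots> = (if 2 \<le> m then ?G 2 0 else 0)" by (simp add: sum.delta)
  also have "\<dots> = ?G 2 z"
  proof (cases "2 \<le> m")
    case True
    have "?G 2 z = ?G 2 (0 *\<^sub>R z)" using G_scale[of 2 "cf b x" 0 z] by simp
    then show ?thesis using True by simp
  next
    case False
    have "Jk m 2 = ({} :: (('n \<Rightarrow> nat) \<times> ('n \<Rightarrow> nat)) set)"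
      using False by (auto simp: Jk_def dest!: JJ_deg)
    then show ?thesis using False by (simp add: pf_def)
  qed
  finally show ?thesis .
qed

lemma harmonic_LK:
  fixes K :: "real \<Rightarrow> real"
  assumes Kc: "continuous_on {0<..} K" and Knn: "\<And>t. t > 0 \<Longrightarrow> K t \<ge> 0"
    and Kt0: "2 \<le> m \<Longrightarrow> \<exists>t0>0. K t0 > 0"
    and harm: "\<And>y. laplacian u y = 0"
  shows "(LK_trunc K u x \<longlongrightarrow> 0) (at_right 0)"
proof -
  let ?G = "\<lambda>k z. pf (Jk m k \<times> (UNIV::'n set)) (lapc (cf b x) snd) (lape snd) z"
  define i0 :: 'n where "i0 = undefined"
  have sumG: "(\<Sum>k\<le>m. ?G k z) = 0" for z
    using lap_shift[OF u_def, of x z] harm[of "x + z"] by simp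
  have G0: "?G k z = 0" if "k \<le> m" for k z
  proof -
    have "\<forall>t. (\<Sum>k\<le>m. ?G k z * t ^ k) = 0"
    proof
      fix t :: real
      have "(\<Sum>k\<le>m. ?G k z * t ^ k) = (\<Sum>k\<le>m. t^2 * ?G k (t *\<^sub>R z))"
      proof (rule sum.cong[OF refl])
        fix k
        show "?G k z * t ^ k = t^2 * ?G k (t *\<^sub>R z)"
        proof (cases "k < 2")
          case True then show ?thesis using G_low by simp
        next
          case False
          then have "k = 2 + (k - 2)" by simp
          then have "t ^ k = t^2 * t^(k-2)" by (metis power_add)
          then show ?thesis unfolding G_scale by simp
        qed
      qed
      also have "\<dots> = t^2 * (\<Sum>k\<le>m. ?G k (t *\<^sub>R z))" by (simp add: sum_distrib_left)
      also have "\<dots> = 0" by (simp add: sumG)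
      finally show "(\<Sum>k\<le>m. ?G k z * t ^ k) = 0" .
    qed
    then show ?thesis using polyfun_eq_0[of "\<lambda>k. ?G k z" m] that by auto
  qed
  have ev: "eventually (\<lambda>\<epsilon>. (\<Sum>p\<in>Jk m k. cf b x p * mom K \<epsilon> (snd p)) = 0) (at_right 0)"
    if k: "k \<in> {..m} - {0}" for k
  proof (cases "odd k")
    case True
    show ?thesis using eventually_at_right_less[of 0]
      by eventually_elim (rule odd_moments[OF Kc _ Jk_deg[OF u_def] True], auto)
  next
    case False
    have evk: "even k" using False by simp
    have "k \<noteq> 0" using k by auto
    then have k2: "k \<ge> 2" using False by presburger
    obtain t0 where t0: "t0 > 0" "K t0 > 0" using Kt0 k2 k by auto
    obtain e0 c where e0: "e0 > 0" "c > 0" and mc: "\<And>\<epsilon>. 0 < \<epsilon> \<Longrightarrow> \<epsilon> \<le> e0 \<Longrightarrow> mom K \<epsilon> (E i0 (k-2)) \<ge> c"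
      using pos_mom[OF Kc Knn t0, of "k-2" i0] False k2 by auto
    have "eventually (\<lambda>\<epsilon>. \<epsilon> \<in> {0<..<e0}) (at_right 0)" by (rule eventually_at_right_real[OF e0(1)])
    then show ?thesis
    proof eventually_elim
      case (elim \<epsilon>)
      then have eps: "\<epsilon> > 0" "\<epsilon> \<le> e0" by auto
      have Apos: "mom K \<epsilon> (E i0 (k-2)) / df (k-2) > 0"
        using mc[OF eps] e0 df_even[of "k-2"] False k2 by simp
      have "real k * (mom K \<epsilon> (E i0 (k-2)) / df (k-2)) * (\<Sum>p\<in>Jk m k. cf b x p * mom K \<epsilon> (snd p))
         = (mom K \<epsilon> (E i0 k) / df k) * (\<Sum>q\<in>Jk m k \<times> UNIV. lapc (cf b x) snd q * mom K \<epsilon> (lape snd q))"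
        by (rule key_identity[OF Kc eps(1) Knn finite_Jk Jk_deg[OF u_def] k2]) (simp_all add: evk)
      also have "(\<Sum>q\<in>Jk m k \<times> UNIV. lapc (cf b x) snd q * mom K \<epsilon> (lape snd q))
          = integral (ann \<epsilon>) (\<lambda>z. ?G k z * K (norm z))"
        by (rule I_pf[OF Kc eps(1), symmetric]) (simp add: finite_Jk)
      also have "\<dots> = 0" using G0 k by simp
      finally show ?case using Apos k2 by (auto simp: divide_simps split: if_splits)
    qed
  qed
  have "eventually (\<lambda>\<epsilon>. \<forall>k\<in>{..m}-{0}. (\<Sum>p\<in>Jk m k. cf b x p * mom K \<epsilon> (snd p)) = 0) (at_right 0)"
    by (rule eventually_ball_finite) (auto intro: ev)
  then have "eventually (\<lambda>\<epsilon>. LK_trunc K u x \<epsilon> = 0) (at_right 0)"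
    using eventually_at_right_less[of 0]
  proof eventually_elim
    case (elim \<epsilon>)
    have "LK_trunc K u x \<epsilon> = - (\<Sum>k\<le>m. if k = 0 then 0 else \<Sum>p\<in>Jk m k. cf b x p * mom K \<epsilon> (snd p))"
      by (rule LK_expand[OF u_def Kc]) (use elim in simp)
    also have "(\<Sum>k\<le>m. if k = 0 then 0 else \<Sum>p\<in>Jk m k. cf b x p * mom K \<epsilon> (snd p)) = 0"
      using elim(1) by (intro sum.neutral ballI) auto
    finally show ?case by simp
  qed
  then show ?thesis by (rule tendsto_eventually)
qed

end

context
  fixes b :: "('n::finite \<Rightarrow> nat) \<Rightarrow> real" and m :: nat and u :: "real^'n \<Rightarrow> real"
  assumes u_def: "u = (\<lambda>x. \<Sum>a\<in>Am m. b a * mnm a x)"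
begin

lemma LK_harm:
  fixes K :: "real \<Rightarrow> real"
  assumes Kc: "continuous_on {0<..} K" and Knn: "\<And>t. t > 0 \<Longrightarrow> K t \<ge> 0"
    and m2: "2 \<le> m" and t0: "t0 > 0" "K t0 > 0"
    and lim: "\<And>y. (LK_trunc K u y \<longlongrightarrow> 0) (at_right 0)"
  shows "laplacian u x = 0"
proof -
  define i0 :: 'n where "i0 = undefined"
  define S where "S = (\<lambda>k \<epsilon>. \<Sum>p\<in>Jk m k. cf b x p * mom K \<epsilon> (snd p))"
  define d where "d = (\<lambda>i \<epsilon>. if i = m then 0 else - S (m - i) \<epsilon>)"
  have scale: "LK_trunc K u (s *\<^sub>R x) \<epsilon> = (\<Sum>i\<le>m. d i \<epsilon> * s ^ i)" if e: "\<epsilon> > 0" for s \<epsilon>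
  proof -
    have "LK_trunc K u (s *\<^sub>R x) \<epsilon> = - (\<Sum>k\<le>m. if k = 0 then 0 else \<Sum>p\<in>Jk m k. cf b (s *\<^sub>R x) p * mom K \<epsilon> (snd p))"
      by (rule LK_expand[OF u_def Kc e])
    also have "\<dots> = (\<Sum>k\<le>m. if k = 0 then 0 else - (s ^ (m - k) * S k \<epsilon>))"
    proof -
      have h: "(\<Sum>p\<in>Jk m k. cf b (s *\<^sub>R x) p * mom K \<epsilon> (snd p)) = s ^ (m - k) * S k \<epsilon>" for k
      proof -
        have "(\<Sum>p\<in>Jk m k. cf b (s *\<^sub>R x) p * mom K \<epsilon> (snd p)) = (\<Sum>p\<in>Jk m k. s ^ (m - k) * (cf b x p * mom K \<epsilon> (snd p)))"
          by (rule sum.cong[OF refl]) (simp add: cf_scale)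
        then show ?thesis by (simp add: S_def sum_distrib_left)
      qed
      show ?thesis by (simp add: h sum_negf[symmetric] if_distrib cong: if_cong)
    qed
    also have "\<dots> = (\<Sum>k=0..m. if k = 0 then 0 else - (s ^ (m - k) * S k \<epsilon>))"
      by (simp add: atMost_atLeast0)
    also have "\<dots> = (\<Sum>i=0..m. if m - i = 0 then 0 else - (s ^ (m - (m - i)) * S (m - i) \<epsilon>))"
      by (subst sum.atLeastAtMost_rev) (rule sum.cong; simp)
    also have "\<dots> = (\<Sum>i=0..m. d i \<epsilon> * s ^ i)"
      by (rule sum.cong[OF refl]) (auto simp: d_def)
    finally show ?thesis by (simp add: atMost_atLeast0)
  qed
  have limd: "((\<lambda>\<epsilon>. \<Sum>i\<le>m. d i \<epsilon> * s ^ i) \<longlongrightarrow> 0) (at_right 0)" for s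
  proof -
    have "eventually (\<lambda>\<epsilon>. LK_trunc K u (s *\<^sub>R x) \<epsilon> = (\<Sum>i\<le>m. d i \<epsilon> * s ^ i)) (at_right 0)"
      using eventually_at_right_less[of 0] by eventually_elim (rule scale)
    with lim[of "s *\<^sub>R x"] show ?thesis by (rule Lim_transform_eventually)
  qed
  have "(d (m - 2) \<longlongrightarrow> 0) (at_right 0)" by (rule vander_lim[OF limd]) simp
  moreover have "d (m - 2) = (\<lambda>\<epsilon>. - S 2 \<epsilon>)" using m2 by (auto simp: d_def fun_eq_iff)
  ultimately have S2: "((\<lambda>\<epsilon>. S 2 \<epsilon>) \<longlongrightarrow> 0) (at_right 0)"
    using tendsto_minus[of "\<lambda>\<epsilon>. - S 2 \<epsilon>" 0 "at_right 0"] by simp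
  let ?G = "\<lambda>z. pf (Jk m 2 \<times> (UNIV::'n set)) (lapc (cf b x) snd) (lape snd) z"
  define L where "L = laplacian u x"
  have GL: "?G z = L" for z unfolding L_def by (rule lap_at[OF u_def, symmetric])
  obtain e0 c where e0: "e0 > 0" "c > 0" and mc: "\<And>\<epsilon>. 0 < \<epsilon> \<Longrightarrow> \<epsilon> \<le> e0 \<Longrightarrow> mom K \<epsilon> (E i0 2) \<ge> c"
    using pos_mom[OF Kc Knn t0, of 2 i0] by auto
  obtain e1 c1 where e1: "e1 > 0" "c1 > 0" and mc1: "\<And>\<epsilon>. 0 < \<epsilon> \<Longrightarrow> \<epsilon> \<le> e1 \<Longrightarrow> mom K \<epsilon> (E i0 0) \<ge> c1"
    using pos_mom[OF Kc Knn t0, of 0 i0] by auto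
  have ev: "eventually (\<lambda>\<epsilon>. c * \<bar>L\<bar> \<le> \<bar>2 * S 2 \<epsilon>\<bar>) (at_right 0)"
  proof -
    have "0 < min e0 e1" using e0 e1 by simp
    from eventually_at_right_real[OF this]
    show ?thesis
  proof eventually_elim
    case (elim \<epsilon>)
    then have eps: "\<epsilon> > 0" "\<epsilon> \<le> e0" "\<epsilon> \<le> e1" by auto
    have df2: "df 2 = 1" by (simp add: numeral_2_eq_2)
    have "real 2 * (mom K \<epsilon> (E i0 (2-2)) / df (2-2)) * S 2 \<epsilon>
       = (mom K \<epsilon> (E i0 2) / df 2) * (\<Sum>q\<in>Jk m 2 \<times> UNIV. lapc (cf b x) snd q * mom K \<epsilon> (lape snd q))"
      unfolding S_def by (rule key_identity[OF Kc eps(1) Knn finite_Jk Jk_deg[OF u_def]]) simp_all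
    also have "(\<Sum>q\<in>Jk m 2 \<times> UNIV. lapc (cf b x) snd q * mom K \<epsilon> (lape snd q))
          = integral (ann \<epsilon>) (\<lambda>z. ?G z * K (norm z))"
      by (rule I_pf[OF Kc eps(1), symmetric]) (simp add: finite_Jk)
    also have "\<dots> = L * mom K \<epsilon> (E i0 0)"
      by (simp add: GL mom_def mono_E)
    finally have "2 * mom K \<epsilon> (E i0 0) * S 2 \<epsilon> = mom K \<epsilon> (E i0 2) * L * mom K \<epsilon> (E i0 0)"
      by (simp add: df2)
    moreover have "mom K \<epsilon> (E i0 0) > 0" using mc1[OF eps(1,3)] e1 by simp
    ultimately have "2 * S 2 \<epsilon> = mom K \<epsilon> (E i0 2) * L" by simp
    moreover have "c \<le> mom K \<epsilon> (E i0 2)" using mc[OF eps(1,2)] .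
    ultimately show ?case using e0 by (simp add: abs_mult mult_right_mono)
  qed
  qed
  have "((\<lambda>\<epsilon>. \<bar>2 * S 2 \<epsilon>\<bar>) \<longlongrightarrow> \<bar>2 * 0\<bar>) (at_right 0)"
    by (intro tendsto_intros S2)
  then have "c * \<bar>L\<bar> \<le> \<bar>2 * 0\<bar>"
    by (rule tendsto_lowerbound[OF _ ev]) simp
  then have "L = 0" using e0 by (simp add: mult_le_0_iff)
  then show ?thesis by (simp add: L_def)
qed

lemma lap_lowm:
  assumes "m < 2"
  shows "laplacian u x = 0"
proof -
  have "laplacian u x = laplacian u (x + 0)" by simp
  also have "\<dots> = (\<Sum>k\<le>m. pf (Jk m k \<times> UNIV) (lapc (cf b x) snd) (lape snd) 0)"
    by (rule lap_shift[OF u_def])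
  also have "\<dots> = 0" using assms by (intro sum.neutral ballI G_low[OF u_def]) auto
  finally show ?thesis .
qed

end

lemma Kpos:
  fixes K :: "real \<Rightarrow> real"
  assumes "(\<integral>\<^sup>+ t \<in> {0<..}. ennreal (K t * t ^ p) \<partial>lborel) > 0"
  shows "\<exists>t0>0. K t0 > 0"
proof (rule ccontr)
  assume "\<not> (\<exists>t0>0. K t0 > 0)"
  then have "\<And>t. t > 0 \<Longrightarrow> K t * t ^ p \<le> 0"
    by (metis mult_nonpos_nonneg not_less order.strict_implies_order zero_le_power)
  then have h: "ennreal (K t * t ^ p) * indicator {0<..} t = 0" for t
    by (auto simp: indicator_def ennreal_eq_0_iff)
  have "(\<integral>\<^sup>+ t \<in> {0<..}. ennreal (K t * t ^ p) \<partial>lborel) = (\<integral>\<^sup>+ t. 0 \<partial>(lborel::real measure))"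
    by (rule nn_integral_cong) (rule h)
  then show False using assms by simp
qed

lemma hom_poly_rep:
  assumes "u \<in> hom_poly m"
  obtains b where "u = (\<lambda>x::real^'n::finite. \<Sum>a\<in>Am m. b a * mnm a x)"
  using assms unfolding hom_poly_def Am_def mnm_def by blast

theorem proposition2p1:
  fixes K :: "real \<Rightarrow> real" and m :: nat
  assumes N2: "CARD('n::finite) \<ge> 2"
    and Kcont: "continuous_on {0<..} K"
    and Knonneg: "\<And>t. t > 0 \<Longrightarrow> K t \<ge> 0"
    and Kmom: "\<And>i. 2 \<le> i \<Longrightarrow> i \<le> m \<Longrightarrow>
        (\<integral>\<^sup>+ t \<in> {0<..}. ennreal (K t * t ^ (CARD('n) - 1 + i)) \<partial>lborel) > 0"
    and lim: "(\<forall>i j. 2 \<le> j \<and> j < i \<and> i \<le> m \<longrightarrow>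
                 (kappa K CARD('n) i j \<longlongrightarrow> 0) (at_right 0))
            \<or> (\<forall>i j. 2 \<le> i \<and> i < j \<and> j \<le> m \<longrightarrow>
                 (kappa K CARD('n) i j \<longlongrightarrow> 0) (at_right 0))"
  shows "(HK K m :: (real^'n \<Rightarrow> real) set) = H1 m
     \<and> (m \<le> 1 \<longrightarrow> (H1 m :: (real^'n \<Rightarrow> real) set) = hom_poly m)"
proof -
  have Kt0: "\<exists>t0>0. K t0 > 0" if "2 \<le> m"
    using Kpos[OF Kmom[of 2]] that by simp
  have A: "(HK K m :: (real^'n \<Rightarrow> real) set) \<subseteq> H1 m"
  proof
    fix u :: "real^'n \<Rightarrow> real" assume u: "u \<in> HK K m"
    then have up: "u \<in> hom_poly m" and lz: "\<And>x. LK_zero_at K u x" by (auto simp: HK_def)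
    obtain b where ub: "u = (\<lambda>x::real^'n. \<Sum>a\<in>Am m. b a * mnm a x)" using hom_poly_rep[OF up] by blast
    have "laplacian u x = 0" for x
    proof (cases "2 \<le> m")
      case True
      obtain t0 where t0: "t0 > 0" "K t0 > 0" using Kt0[OF True] by blast
      show ?thesis
        by (rule LK_harm[OF ub Kcont Knonneg True t0]) (use lz in \<open>auto simp: LK_zero_at_def\<close>)
    next
      case False
      then show ?thesis by (intro lap_lowm[OF ub]) simp
    qed
    then show "u \<in> H1 m" using up by (simp add: H1_def)
  qed
  have B: "(H1 m :: (real^'n \<Rightarrow> real) set) \<subseteq> HK K m"
  proof
    fix u :: "real^'n \<Rightarrow> real" assume u: "u \<in> H1 m"
    then have up: "u \<in> hom_poly m" and harm: "\<And>x. laplacian u x = 0" by (auto simp: H1_def)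
    obtain b where ub: "u = (\<lambda>x::real^'n. \<Sum>a\<in>Am m. b a * mnm a x)" using hom_poly_rep[OF up] by blast
    have "LK_zero_at K u x" for x
      unfolding LK_zero_at_def by (rule harmonic_LK[OF ub Kcont Knonneg Kt0 harm])
    then show "u \<in> HK K m" using up unfolding HK_def by blast
  qed
  have C: "m \<le> 1 \<longrightarrow> (H1 m :: (real^'n \<Rightarrow> real) set) = hom_poly m"
  proof
    assume m1: "m \<le> 1"
    show "(H1 m :: (real^'n \<Rightarrow> real) set) = hom_poly m"
    proof
      show "(H1 m :: (real^'n \<Rightarrow> real) set) \<subseteq> hom_poly m" by (auto simp: H1_def)
      show "hom_poly m \<subseteq> (H1 m :: (real^'n \<Rightarrow> real) set)"
      proof
        fix u :: "real^'n \<Rightarrow> real" assume up: "u \<in> hom_poly m"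
        obtain b where ub: "u = (\<lambda>x::real^'n. \<Sum>a\<in>Am m. b a * mnm a x)" using hom_poly_rep[OF up] by blast
        have "laplacian u x = 0" for x using m1 by (intro lap_lowm[OF ub]) simp
        then show "u \<in> H1 m" using up by (simp add: H1_def)
      qed
    qed
  qed
  show ?thesis using A B C by blast
qed

end
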